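(* (1) Let $F_2$ be the free group with basis $\{a,b\}$, and consider the power series in two variables $$\Delta_{F_2}(z_1,z_2)=\sum_{g\in F_2} z_1^{|g|_{a}+|g|_{a^{-1}}}\,z_2^{|g|_{b}+|g|_{b^{-1}}},$$ where for $g\in F_2$, $|g|_{x}$ denotes the number of occurrences of the letter $x$ in the freely reduced word over $\{a,a^{-1},b,b^{-1}\}$ representing $g$. Then for every $\mathbf r=(p,q)\in M_2$ the indicatrice of growth of $\Delta_{F_2}$ is $$\psi_{F_2}(\mathbf r)=\mathbf H(\mathbf r)+p\log\!\left(2q-p+2\sqrt{p^2-pq+q^2}\right)+q\log\!\left(2p-q+2\sqrt{p^2-pq+q^2}\right),$$ where $\mathbf H(\mathbf r)=-p\log p-q\log q$ is the Shannon entropy (with $0\log 0=0$). (2) Let $L_{Fib}\subset\{a,b\}^*$ be the Fibonacci language, i.e. the set of all finite words over $\{a,b\}$ not containing $bb$ as a subword, and let $\Gamma_{Fib}(z_1,z_2)=\sum_{w\in L_{Fib}} z_1^{|w|_a}z_2^{|w|_b}$ (which equals $\frac{1+z_2}{1-z_1-z_1z_2}$). Then for $\mathbf r=(p,q)=(p,1-p)$ with $0<p<1$, the indicatrice of growth of $\Gamma_{Fib}$ is $$\psi_{Fib}(\mathbf r)=p\log\!\left(\frac{p}{p-q}\right)+q\log\!\left(\frac{p-q}{q}\right)\ \text{ if } p\ge \tfrac12,\qquad \psi_{Fib}(\mathbf r)=-\infty\ \text{ if } p<\tfrac12 .$$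
   Context: $M_d=\{\mathbf r\in\mathbb R_{\ge 0}^d:\ \|\mathbf r\|=\sum_i r_i=1\}$, where $\|\cdot\|$ is the $\ell^1$ norm on $\mathbb R^d$. For a power series $\Gamma(\mathbf z)=\sum_{\mathbf i\in\mathbb N^d} f_{\mathbf i}\mathbf z^{\mathbf i}$ with nonnegative coefficients, the indicatrice of growth is defined as follows. For an open cone $C\subset\mathbb R^d$ put $\tau_C=\limsup_{R\to\infty}\frac1R\log\Big(\sum_{\mathbf i\in C\cap\mathbb N^d,\ R\le\|\mathbf i\|\le R+1} f_{\mathbf i}\Big)$ (with $\log 0=-\infty$), and for $\mathbf r\ne 0$ put $\psi(\mathbf r)=\|\mathbf r\|\inf_{C\ni\mathbf r}\tau_C$, the infimum over open cones containing $\mathbf r$; also $\psi(\mathbf 0)=0$. $\psi_{F_2}$ and $\psi_{Fib}$ denote this function for $\Delta_{F_2}$ and $\Gamma_{Fib}$ respectively. *)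

theory Defs
  imports "HOL-Analysis.Analysis"
begin

definition M2 :: "(real \<times> real) set" where
  "M2 = {(p, q). p \<ge> 0 \<and> q \<ge> 0 \<and> p + q = 1}"

definition l1norm :: "real \<times> real \<Rightarrow> real" where
  "l1norm r = \<bar>fst r\<bar> + \<bar>snd r\<bar>"

definition open_cone :: "(real \<times> real) set \<Rightarrow> bool" where
  "open_cone C \<longleftrightarrow> open C \<and> (\<forall>x\<in>C. \<forall>t::real. t > 0 \<longrightarrow> t *\<^sub>R x \<in> C)"

definition shell :: "(real \<times> real) set \<Rightarrow> real \<Rightarrow> (nat \<times> nat) set" where
  "shell C R = {i. (real (fst i), real (snd i)) \<in> C
                   \<and> R \<le> real (fst i + snd i) \<and> real (fst i + snd i) \<le> R + 1}"

definition shell_rate :: "(nat \<times> nat \<Rightarrow> real) \<Rightarrow> (real \<times> real) set \<Rightarrow> real \<Rightarrow> ereal" where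
  "shell_rate f C R =
     (let S = (\<Sum>i\<in>shell C R. f i) in if S = 0 then -\<infinity> else ereal (ln S / R))"

definition tau :: "(nat \<times> nat \<Rightarrow> real) \<Rightarrow> (real \<times> real) set \<Rightarrow> ereal" where
  "tau f C = Limsup at_top (shell_rate f C)"

definition indicatrice :: "(nat \<times> nat \<Rightarrow> real) \<Rightarrow> real \<times> real \<Rightarrow> ereal" where
  "indicatrice f r =
     (if r = 0 then 0
      else ereal (l1norm r) * (INF C \<in> {C. open_cone C \<and> r \<in> C}. tau f C))"

datatype gen = A | B

(* letters of F_2: (generator, inverted?) ; (A,False)=a, (A,True)=a^-1, etc. *)
type_synonym letter = "gen \<times> bool"

(* freely reduced words over {a, a^-1, b, b^-1}; these are in bijection with F_2 *)
definition freely_reduced :: "letter list \<Rightarrow> bool" where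
  "freely_reduced w \<longleftrightarrow>
     (\<forall>i. Suc i < length w \<longrightarrow>
        \<not> (fst (w ! i) = fst (w ! Suc i) \<and> snd (w ! i) \<noteq> snd (w ! Suc i)))"

(* |g|_a + |g|_{a^-1}  and  |g|_b + |g|_{b^-1} *)
definition occ :: "gen \<Rightarrow> letter list \<Rightarrow> nat" where
  "occ x w = length (filter (\<lambda>l. fst l = x) w)"

definition coeff_F2 :: "nat \<times> nat \<Rightarrow> real" where
  "coeff_F2 i = real (card {w. freely_reduced w \<and> occ A w = fst i \<and> occ B w = snd i})"

definition L_Fib :: "gen list set" where
  "L_Fib = {w. \<not> (\<exists>u v. w = u @ [B, B] @ v)}"

definition count_letter :: "gen \<Rightarrow> gen list \<Rightarrow> nat" where
  "count_letter x w = length (filter (\<lambda>y. y = x) w)"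

definition coeff_Fib :: "nat \<times> nat \<Rightarrow> real" where
  "coeff_Fib i = real (card {w \<in> L_Fib. count_letter A w = fst i \<and> count_letter B w = snd i})"

definition psi_F2 :: "real \<times> real \<Rightarrow> ereal" where
  "psi_F2 = indicatrice coeff_F2"

definition psi_Fib :: "real \<times> real \<Rightarrow> ereal" where
  "psi_Fib = indicatrice coeff_Fib"

(* Shannon entropy; note ln 0 = 0 in Isabelle, so 0 * ln 0 = 0 as required *)
definition entropy2 :: "real \<times> real \<Rightarrow> real" where
  "entropy2 r = - fst r * ln (fst r) - snd r * ln (snd r)"

end

theory Submission
  imports Defs "HOL-Real_Asymp.Real_Asymp"
begin

lemma shell_sub: "R \<ge> 0 \<Longrightarrow> shell C R \<subseteq> {..nat \<lfloor>R+1\<rfloor>} \<times> {..nat \<lfloor>R+1\<rfloor>}"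
proof
  fix i assume R: "R \<ge> 0" and i: "i \<in> shell C R"
  obtain a b where ab: "i = (a,b)" by force
  from i ab have "real (a + b) \<le> R + 1" by (simp add: shell_def)
  hence "real a \<le> R + 1" "real b \<le> R + 1" by auto
  hence "int a \<le> \<lfloor>R+1\<rfloor>" "int b \<le> \<lfloor>R+1\<rfloor>"
    by (subst le_floor_iff, simp)+
  hence "a \<le> nat \<lfloor>R+1\<rfloor>" "b \<le> nat \<lfloor>R+1\<rfloor>" by linarith+
  thus "i \<in> {..nat \<lfloor>R+1\<rfloor>} \<times> {..nat \<lfloor>R+1\<rfloor>}" using ab by auto
qed

lemma shell_finite: "R \<ge> 0 \<Longrightarrow> finite (shell C R)"
  using shell_sub by (meson finite_SigmaI finite_atMost finite_subset)

lemma shell_card: assumes "R \<ge> 0" shows "real (card (shell C R)) \<le> (R+2)^2"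
proof -
  have "card (shell C R) \<le> card ({..nat \<lfloor>R+1\<rfloor>} \<times> {..nat \<lfloor>R+1\<rfloor>})"
    by (rule card_mono) (use shell_sub assms in auto)
  also have "\<dots> = (nat \<lfloor>R+1\<rfloor> + 1)^2" by (simp add: card_cartesian_product power2_eq_square)
  finally have "real (card (shell C R)) \<le> (real (nat \<lfloor>R+1\<rfloor>) + 1)^2"
    by (metis of_nat_1 of_nat_add of_nat_le_iff of_nat_power)
  also have "\<dots> \<le> (R+2)^2"
  proof -
    have "real (nat \<lfloor>R+1\<rfloor>) \<le> R + 1" using assms by linarith
    thus ?thesis by (intro power_mono) auto
  qed
  finally show ?thesis .
qed

lemma indicatrice_M2:
  assumes "(p,q) \<in> M2"
  shows "indicatrice f (p,q) = (INF C \<in> {C. open_cone C \<and> (p,q) \<in> C}. tau f C)"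
proof -
  have "l1norm (p,q) = 1" "(p,q) \<noteq> 0" using assms by (auto simp: M2_def l1norm_def zero_prod_def)
  thus ?thesis by (simp add: indicatrice_def one_ereal_def[symmetric])
qed

lemma open_cone_halfplanes:
  fixes a b K :: real
  shows "open_cone {z. 0 < fst z + snd z \<and> a * fst z + b * snd z < K * (fst z + snd z)}"
proof -
  let ?C = "{z::real\<times>real. 0 < fst z + snd z \<and> a * fst z + b * snd z < K * (fst z + snd z)}"
  have "?C = {z::real\<times>real. 0 < fst z + snd z} \<inter> {z. a * fst z + b * snd z < K * (fst z + snd z)}"
    by auto
  moreover have "open {z::real\<times>real. 0 < fst z + snd z}"
    by (rule open_Collect_less) (intro continuous_intros)+
  moreover have "open {z::real\<times>real. a * fst z + b * snd z < K * (fst z + snd z)}"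
    by (rule open_Collect_less) (intro continuous_intros)+
  ultimately have "open ?C" by auto
  moreover have "\<forall>x\<in>?C. \<forall>t::real. t > 0 \<longrightarrow> t *\<^sub>R x \<in> ?C"
  proof (intro ballI allI impI)
    fix x :: "real \<times> real" and t :: real assume x: "x \<in> ?C" and t: "t > 0"
    have "0 < t * (fst x + snd x)" using x t by auto
    moreover have "t * (a * fst x + b * snd x) < t * (K * (fst x + snd x))"
      using x t by (intro mult_strict_left_mono) auto
    ultimately show "t *\<^sub>R x \<in> ?C" by (simp add: algebra_simps)
  qed
  ultimately show ?thesis unfolding open_cone_def by blast
qed

lemma ub_generic:
  fixes f :: "nat \<times> nat \<Rightarrow> real"
  assumes fnn: "\<And>i. 0 \<le> f i" and x: "x > 0" and y: "y > 0"
    and bound: "\<And>n m. f (n,m) * x^n * y^m \<le> c"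
    and pq: "p + q = 1" and K: "- (p * ln x) - q * ln y < K"
  shows "\<exists>C. open_cone C \<and> (p,q) \<in> C \<and> tau f C \<le> ereal K"
proof -
  define a where "a = - ln x"
  define b where "b = - ln y"
  define C where "C = {z::real\<times>real. 0 < fst z + snd z \<and> a * fst z + b * snd z < K * (fst z + snd z)}"
  define c' where "c' = max c 1"
  have c': "c' > 0" by (simp add: c'_def)
  have oc: "open_cone C" unfolding C_def by (rule open_cone_halfplanes)
  have pqC: "(p,q) \<in> C"
  proof -
    have "a*p + b*q < K*(p+q)" using pq K by (simp add: a_def b_def mult.commute)
    thus ?thesis using pq by (simp add: C_def)
  qed
  define h where "h = (\<lambda>R::real. (2 * ln (R+2) + ln c' + \<bar>K\<bar>) / R + K)"
  have fb: "f (n,m) \<le> c' * exp (a * n + b * m)" for n m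
  proof -
    have "x^n * y^m = exp (- (a * n + b * m))"
      using x y by (simp add: a_def b_def exp_add exp_of_nat_mult mult.commute[of "ln _"])
    hence "f (n,m) * exp (- (a * n + b * m)) \<le> c'" using bound[of n m] by (simp add: c'_def mult.assoc)
    moreover have "f (n,m) = (f (n,m) * exp (- (a * n + b * m))) * exp (a * n + b * m)"
      by (simp add: mult.assoc exp_add[symmetric])
    ultimately show ?thesis by (metis exp_ge_zero mult_right_mono)
  qed
  have ev: "eventually (\<lambda>R. shell_rate f C R \<le> ereal (h R)) at_top"
    using eventually_ge_at_top[of "1::real"]
  proof eventually_elim
    case (elim R)
    define S where "S = (\<Sum>i\<in>shell C R. f i)"
    show ?case
    proof (cases "S = 0")
      case True thus ?thesis by (simp add: shell_rate_def S_def Let_def)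
    next
      case False
      have S0: "S \<ge> 0" unfolding S_def by (intro sum_nonneg fnn)
      hence Spos: "S > 0" using False by auto
      have tm: "f i \<le> c' * exp (K * R + \<bar>K\<bar>)" if i: "i \<in> shell C R" for i
      proof -
        obtain n m where nm: "i = (n,m)" by force
        have inC: "a * n + b * m < K * (n + m)" and R1: "R \<le> n + m" and R2: "n + m \<le> R + 1"
          using i nm by (auto simp: shell_def C_def)
        have "K * (n+m) = K * R + K * (n + m - R)" by (simp add: algebra_simps)
        also have "K * (n + m - R) \<le> \<bar>K\<bar>"
        proof -
          have "\<bar>K * (n + m - R)\<bar> \<le> \<bar>K\<bar> * 1"
            unfolding abs_mult using R1 R2 by (intro mult_left_mono) auto
          thus ?thesis by linarith
        qed
        finally have "a * n + b * m \<le> K * R + \<bar>K\<bar>" using inC by linarith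
        hence "exp (a * n + b * m) \<le> exp (K * R + \<bar>K\<bar>)" by simp
        with fb[of n m] c' show ?thesis unfolding nm
          by (meson mult_left_mono less_imp_le order_trans)
      qed
      have "S \<le> (\<Sum>i\<in>shell C R. c' * exp (K * R + \<bar>K\<bar>))"
        unfolding S_def by (rule sum_mono) (rule tm)
      also have "\<dots> = real (card (shell C R)) * (c' * exp (K * R + \<bar>K\<bar>))" by simp
      also have "\<dots> \<le> (R+2)^2 * (c' * exp (K * R + \<bar>K\<bar>))"
        using shell_card[of R C] elim c' by (intro mult_right_mono) auto
      finally have Sle: "S \<le> (R+2)^2 * (c' * exp (K * R + \<bar>K\<bar>))" .
      have "ln S \<le> ln ((R+2)^2 * (c' * exp (K * R + \<bar>K\<bar>)))"
        using Spos Sle by (subst ln_le_cancel_iff) auto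
      also have "\<dots> = 2 * ln (R+2) + ln c' + (K * R + \<bar>K\<bar>)"
        using elim c' by (simp add: ln_mult ln_realpow)
      finally have "ln S / R \<le> (2 * ln (R+2) + ln c' + (K * R + \<bar>K\<bar>)) / R"
        using elim by (intro divide_right_mono) auto
      also have "\<dots> = h R" using elim by (simp add: h_def field_simps)
      finally show ?thesis using False by (simp add: shell_rate_def S_def[symmetric] Let_def)
    qed
  qed
  have "(h \<longlongrightarrow> K) at_top" unfolding h_def by real_asymp
  hence "((\<lambda>R. ereal (h R)) \<longlongrightarrow> ereal K) at_top" by (rule tendsto_ereal)
  hence "Limsup at_top (\<lambda>R. ereal (h R)) = ereal K" by (intro lim_imp_Limsup) auto
  moreover have "tau f C \<le> Limsup at_top (\<lambda>R. ereal (h R))"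
    unfolding tau_def by (rule Limsup_mono[OF ev])
  ultimately show ?thesis using oc pqC by auto
qed

lemma nat_ceiling_filterlim: "filterlim (\<lambda>R::real. nat \<lceil>R\<rceil>) sequentially at_top"
  unfolding filterlim_at_top
proof
  fix Z :: nat
  show "eventually (\<lambda>R::real. Z \<le> nat \<lceil>R\<rceil>) at_top"
    using eventually_ge_at_top[of "real Z"] by eventually_elim linarith
qed

lemma nat_ceiling_ratio: "((\<lambda>R::real. real (nat \<lceil>R\<rceil>) / R) \<longlongrightarrow> 1) at_top"
proof (rule tendsto_sandwich[of "\<lambda>_. 1" _ _ "\<lambda>R. 1 + 1 / R"])
  show "eventually (\<lambda>R. 1 \<le> real (nat \<lceil>R\<rceil>) / R) at_top"
    using eventually_gt_at_top[of "0::real"]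
  proof eventually_elim
    case (elim R)
    have "R \<le> real (nat \<lceil>R\<rceil>)" by linarith
    thus ?case using elim by (simp add: le_divide_eq)
  qed
  show "eventually (\<lambda>R. real (nat \<lceil>R\<rceil>) / R \<le> 1 + 1 / R) at_top"
    using eventually_gt_at_top[of "0::real"]
  proof eventually_elim
    case (elim R)
    have "real (nat \<lceil>R\<rceil>) \<le> R + 1" using elim by linarith
    hence "real (nat \<lceil>R\<rceil>) / R \<le> (R + 1) / R" using elim by (intro divide_right_mono) auto
    thus ?case using elim by (simp add: add_divide_distrib)
  qed
  show "((\<lambda>R::real. 1 + 1 / R) \<longlongrightarrow> 1) at_top" by real_asymp
qed simp

lemma lb_generic:
  fixes f :: "nat \<times> nat \<Rightarrow> real" and n m :: "nat \<Rightarrow> nat" and g :: "nat \<Rightarrow> real"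
  assumes fnn: "\<And>i. 0 \<le> f i" and oc: "open_cone C" and pqC: "(p,q) \<in> C" and pq: "p + q = 1"
    and nm: "\<And>N. n N + m N = N"
    and conv: "(\<lambda>N. real (n N) / real N) \<longlonglongrightarrow> p"
    and gL: "g \<longlonglongrightarrow> L"
    and ev: "eventually (\<lambda>N. 0 < f (n N, m N) \<and> real N * g N \<le> ln (f (n N, m N))) sequentially"
  shows "ereal L \<le> tau f C"
proof -
  have "eventually (\<lambda>N. real (m N) / real N = 1 - real (n N) / real N) sequentially"
    using eventually_gt_at_top[of "0::nat"]
  proof eventually_elim
    case (elim N)
    have "real (m N) = real N - real (n N)" using nm[of N] by (metis add_diff_cancel_left' of_nat_add)
    thus ?case using elim by (simp add: field_simps)
  qed
  moreover have "(\<lambda>N. 1 - real (n N) / real N) \<longlonglongrightarrow> 1 - p" by (intro tendsto_intros conv)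
  ultimately have convm: "(\<lambda>N. real (m N) / real N) \<longlonglongrightarrow> q"
  proof -
    have q1: "1 - p = q" using pq by simp
    have "(\<lambda>N. 1 - real (n N) / real N) \<longlonglongrightarrow> q" using \<open>(\<lambda>N. 1 - real (n N) / real N) \<longlonglongrightarrow> 1 - p\<close>
      unfolding q1 .
    moreover have "eventually (\<lambda>N. 1 - real (n N) / real N = real (m N) / real N) sequentially"
      using \<open>eventually (\<lambda>N. real (m N) / real N = 1 - real (n N) / real N) sequentially\<close>
      by (simp add: eq_commute)
    ultimately show ?thesis by (rule Lim_transform_eventually)
  qed
  have "(\<lambda>N. (real (n N) / real N, real (m N) / real N)) \<longlonglongrightarrow> (p,q)"
    by (intro tendsto_Pair conv convm)
  moreover have "open C" using oc by (simp add: open_cone_def)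
  ultimately have evC: "eventually (\<lambda>N. (real (n N) / real N, real (m N) / real N) \<in> C) sequentially"
    using pqC by (rule topological_tendstoD)
  have "eventually (\<lambda>N. (real (n N), real (m N)) \<in> C) sequentially"
    using evC eventually_gt_at_top[of "0::nat"]
  proof eventually_elim
    case (elim N)
    hence "real N *\<^sub>R (real (n N) / real N, real (m N) / real N) \<in> C"
      using oc unfolding open_cone_def by (meson of_nat_0_less_iff)
    thus ?case using elim by simp
  qed
  with ev eventually_gt_at_top[of "0::nat"]
  have "eventually (\<lambda>N. 0 < N \<and> (real (n N), real (m N)) \<in> C \<and> 0 < f (n N, m N) \<and>
      real N * g N \<le> ln (f (n N, m N))) sequentially"
    by eventually_elim auto
  then obtain N0 where N0: "\<And>N. N \<ge> N0 \<Longrightarrow> 0 < N \<and> (real (n N), real (m N)) \<in> C \<and> 0 < f (n N, m N) \<and>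
      real N * g N \<le> ln (f (n N, m N))"
    unfolding eventually_sequentially by blast
  define h where "h = (\<lambda>R::real. real (nat \<lceil>R\<rceil>) / R * g (nat \<lceil>R\<rceil>))"
  have evh: "eventually (\<lambda>R. ereal (h R) \<le> shell_rate f C R) at_top"
    using eventually_ge_at_top[of "real N0"] eventually_gt_at_top[of "0::real"]
  proof eventually_elim
    case (elim R)
    define N where "N = nat \<lceil>R\<rceil>"
    have NN0: "N \<ge> N0" using elim unfolding N_def by linarith
    have RN: "R \<le> real N" "real N \<le> R + 1" using elim unfolding N_def by linarith+
    have P: "(real (n N), real (m N)) \<in> C" "0 < f (n N, m N)" "real N * g N \<le> ln (f (n N, m N))"
      using N0[OF NN0] by auto
    have sh: "(n N, m N) \<in> shell C R" using P(1) RN nm[of N] by (simp add: shell_def)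
    define S where "S = (\<Sum>i\<in>shell C R. f i)"
    have "f (n N, m N) \<le> S" unfolding S_def
      by (rule member_le_sum[OF sh]) (use fnn shell_finite elim in auto)
    hence Spos: "S > 0" and "ln (f (n N, m N)) \<le> ln S" using P(2) by auto
    hence "real N * g N \<le> ln S" using P(3) by linarith
    hence "h R \<le> ln S / R" using elim unfolding h_def N_def[symmetric]
      by (simp add: field_simps)
    thus ?case using Spos by (simp add: shell_rate_def S_def[symmetric] Let_def)
  qed
  have "((\<lambda>R::real. g (nat \<lceil>R\<rceil>)) \<longlongrightarrow> L) at_top"
    using filterlim_compose[OF gL nat_ceiling_filterlim] by simp
  hence "(h \<longlongrightarrow> 1 * L) at_top" unfolding h_def by (intro tendsto_mult nat_ceiling_ratio)
  hence "((\<lambda>R. ereal (h R)) \<longlongrightarrow> ereal L) at_top" by (simp add: tendsto_ereal)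
  hence "Limsup at_top (\<lambda>R. ereal (h R)) = ereal L" by (intro lim_imp_Limsup) auto
  moreover have "Limsup at_top (\<lambda>R. ereal (h R)) \<le> tau f C"
    unfolding tau_def by (rule Limsup_mono[OF evh])
  ultimately show ?thesis by simp
qed

lemma minf_generic:
  fixes f :: "nat \<times> nat \<Rightarrow> real"
  assumes "eventually (\<lambda>R. (\<Sum>i\<in>shell C R. f i) = 0) at_top"
  shows "tau f C = -\<infinity>"
proof -
  have "eventually (\<lambda>R. shell_rate f C R = -\<infinity>) at_top"
    using assms by eventually_elim (simp add: shell_rate_def)
  hence "(shell_rate f C \<longlongrightarrow> -\<infinity>) at_top" by (rule tendsto_eventually)
  thus ?thesis unfolding tau_def by (intro lim_imp_Limsup) auto
qed

lemma choose_shift: "Suc k * (n choose Suc k) = (n - k) * (n choose k)"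
  using binomial_absorption[of k n] binomial_absorb_comp[of n k] by simp

lemma binom_max:
  fixes N K :: nat
  assumes KN: "K \<le> N"
  shows "N^N \<le> (N+1) * ((N choose K) * K^K * (N-K)^(N-K))"
proof -
  define a where "a = (\<lambda>i. (N choose i) * K^i * (N-K)^(N-i))"
  have rel: "a (Suc i) * (Suc i * (N-K)) = a i * ((N-i)*K)" if "i < N" for i
  proof -
    have e: "(N-K)^(N-i) = (N-K)^(N - Suc i) * (N-K)" using that
      by (metis Suc_diff_Suc power_Suc2)
    have "a (Suc i) * (Suc i * (N-K)) = (Suc i * (N choose Suc i)) * (K^i * K) * ((N-K)^(N - Suc i) * (N-K))"
      unfolding a_def by (simp only: power_Suc2 mult_ac)
    also have "\<dots> = ((N - i) * (N choose i)) * (K^i * K) * (N-K)^(N-i)"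
      by (simp only: choose_shift e)
    also have "\<dots> = a i * ((N-i)*K)" unfolding a_def by (simp only: mult_ac)
    finally show ?thesis .
  qed
  have up: "a i \<le> a (Suc i)" if "i < K" for i
  proof (cases "K = N")
    case True
    have "N - i > 0" using that True by simp
    hence "a i = 0" using True by (simp add: a_def)
    thus ?thesis by simp
  next
    case False
    hence pos: "Suc i * (N-K) > 0" using KN by simp
    define d where "d = K - Suc i"
    define e where "e = N - K"
    have d: "K = Suc i + d" using that unfolding d_def by simp
    have e: "N = K + e" using KN unfolding e_def by simp
    have NK: "N - K = e" and Ni: "N - i = Suc (d + e)" using d e by auto
    have "Suc i * (N-K) = Suc i * e" by (simp only: NK)
    also have "\<dots> \<le> (Suc i + d) * Suc (d + e)" by (intro mult_le_mono) auto
    also have "\<dots> = (N-i)*K" by (simp only: Ni d[symmetric] mult.commute)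
    finally have "Suc i * (N-K) \<le> (N-i)*K" .
    hence "a i * (Suc i * (N-K)) \<le> a i * ((N-i)*K)" by (rule mult_le_mono2)
    also have "\<dots> = a (Suc i) * (Suc i * (N-K))" using rel[of i] that KN by simp
    finally have "a i * (Suc i * (N-K)) \<le> a (Suc i) * (Suc i * (N-K))" .
    thus ?thesis using pos mult_le_cancel2 by blast
  qed
  have down: "a (Suc i) \<le> a i" if "K \<le> i" "i < N" for i
  proof -
    have pos: "Suc i * (N-K) > 0" using that by simp
    define d where "d = i - K"
    define e where "e = N - Suc i"
    have d: "i = K + d" using that unfolding d_def by simp
    have e: "N = Suc i + e" using that unfolding e_def by simp
    have NK: "N - K = Suc (d + e)" and Ni: "N - i = Suc e" using d e by auto
    have "(N-i)*K = K * Suc e" by (simp only: Ni mult.commute)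
    also have "\<dots> \<le> Suc (K + d) * Suc (d + e)" by (intro mult_le_mono) auto
    also have "\<dots> = Suc i * (N-K)" by (simp only: NK d[symmetric])
    finally have le1: "(N-i)*K \<le> Suc i * (N-K)" .
    have "a (Suc i) * (Suc i * (N-K)) = a i * ((N-i)*K)" using rel[of i] that by simp
    also have "\<dots> \<le> a i * (Suc i * (N-K))" by (rule mult_le_mono2) (rule le1)
    finally have "a (Suc i) * (Suc i * (N-K)) \<le> a i * (Suc i * (N-K))" .
    thus ?thesis using pos mult_le_cancel2 by blast
  qed
  have le: "a i \<le> a K" if "i \<le> N" for i
  proof (cases "i \<le> K")
    case True
    thus ?thesis
    proof (induction rule: inc_induct)
      case base thus ?case by simp
    next
      case (step n) thus ?case using up[of n] by simp
    qed
  next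
    case False
    hence "K \<le> i" by simp
    thus ?thesis using that
    proof (induction rule: dec_induct)
      case base thus ?case by simp
    next
      case (step n) thus ?case using down[of n] by simp
    qed
  qed
  have "N^N = (K + (N-K))^N" using KN by simp
  also have "\<dots> = (\<Sum>i\<le>N. a i)" unfolding binomial a_def by simp
  also have "\<dots> \<le> (\<Sum>i\<le>N. a K)" by (rule sum_mono) (use le in simp)
  also have "\<dots> = (N+1) * a K" by simp
  finally show ?thesis by (simp add: a_def)
qed

lemma ln_binom_lower:
  fixes N K :: nat
  assumes "0 < K" "K < N"
  shows "- (real K * ln (real K / real N)) - real (N-K) * ln (real (N-K) / real N) - ln (real N + 1)
    \<le> ln (real (N choose K))"
proof -
  have "real (N^N) \<le> real ((N+1) * ((N choose K) * K^K * (N-K)^(N-K)))"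
    using binom_max[of K N] assms by (simp only: of_nat_le_iff)
  hence h: "real N ^ N \<le> (real N + 1) * (real (N choose K) * real K ^ K * real (N-K) ^ (N-K))"
    by (simp add: distrib_right)
  have Cpos: "real (N choose K) > 0" using assms by simp
  have NK: "real (N - K) > 0" using assms by simp
  have "ln (real N ^ N) \<le> ln ((real N + 1) * (real (N choose K) * real K ^ K * real (N-K) ^ (N-K)))"
    using h assms Cpos NK by (subst ln_le_cancel_iff) auto
  hence "real N * ln (real N) \<le> ln (real N + 1) + ln (real (N choose K)) + real K * ln (real K)
      + real (N-K) * ln (real (N-K))"
    using assms Cpos NK by (simp add: ln_mult ln_realpow)
  moreover have "real (N-K) = real N - real K" using assms by simp
  ultimately show ?thesis using assms NK by (simp add: ln_div algebra_simps)
qed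

lemma UNIV_gen: "(UNIV :: gen set) = {A, B}"
  using gen.exhaust by auto

lemma finite_gen: "finite (UNIV :: gen set)"
  by (simp add: UNIV_gen)

lemma LFib_Cons: "(x # w \<in> L_Fib) \<longleftrightarrow> (w \<in> L_Fib \<and> \<not> (x = B \<and> w \<noteq> [] \<and> hd w = B))"
proof
  assume h: "x # w \<in> L_Fib"
  have "w \<in> L_Fib"
  proof (rule ccontr)
    assume "w \<notin> L_Fib"
    then obtain u v where "w = u @ [B,B] @ v" by (auto simp: L_Fib_def)
    hence "x # w = (x # u) @ [B,B] @ v" by simp
    thus False using h unfolding L_Fib_def by blast
  qed
  moreover have "\<not> (x = B \<and> w \<noteq> [] \<and> hd w = B)"
  proof
    assume "x = B \<and> w \<noteq> [] \<and> hd w = B"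
    hence "x # w = [] @ [B,B] @ tl w" by (cases w) auto
    thus False using h unfolding L_Fib_def by blast
  qed
  ultimately show "w \<in> L_Fib \<and> \<not> (x = B \<and> w \<noteq> [] \<and> hd w = B)" by blast
next
  assume h: "w \<in> L_Fib \<and> \<not> (x = B \<and> w \<noteq> [] \<and> hd w = B)"
  show "x # w \<in> L_Fib"
  proof (rule ccontr)
    assume "x # w \<notin> L_Fib"
    then obtain u v where uv: "x # w = u @ [B,B] @ v" by (auto simp: L_Fib_def)
    show False
    proof (cases u)
      case Nil
      thus False using uv h by auto
    next
      case (Cons y u')
      hence "w = u' @ [B,B] @ v" using uv by simp
      thus False using h unfolding L_Fib_def by blast
    qed
  qed
qed

lemma Nil_LFib: "[] \<in> L_Fib" by (simp add: L_Fib_def)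

definition FS :: "nat \<Rightarrow> nat \<Rightarrow> gen list set" where
  "FS n m = {w \<in> L_Fib. count_letter A w = n \<and> count_letter B w = m}"

lemma count_letter_simps [simp]:
  "count_letter x [] = 0"
  "count_letter x (y # w) = (if y = x then Suc (count_letter x w) else count_letter x w)"
  by (simp_all add: count_letter_def)

lemma length_count: "length w = count_letter A w + count_letter B w"
proof (induction w)
  case Nil thus ?case by simp
next
  case (Cons y w) thus ?case by (cases y) auto
qed

lemma FS_finite: "finite (FS n m)"
proof (rule finite_subset)
  show "FS n m \<subseteq> {w. set w \<subseteq> UNIV \<and> length w = n + m}"
    by (auto simp: FS_def length_count)
  show "finite {w. set w \<subseteq> (UNIV :: gen set) \<and> length w = n + m}"
    by (rule finite_lists_length_eq) (rule finite_gen)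
qed

lemma FS_decomp:
  "FS n m = (if n = 0 \<and> m = 0 then {[]} else {}) \<union> (if n = 0 \<and> m = 1 then {[B]} else {})
     \<union> (if n > 0 then Cons A ` FS (n-1) m else {})
     \<union> (if n > 0 \<and> m > 0 then (\<lambda>w. B # A # w) ` FS (n-1) (m-1) else {})"
  (is "?L = ?R")
proof
  show "?L \<subseteq> ?R"
  proof
    fix w assume w: "w \<in> ?L"
    show "w \<in> ?R"
    proof (cases w)
      case Nil thus ?thesis using w by (simp add: FS_def)
    next
      case (Cons x w')
      show ?thesis
      proof (cases x)
        case A
        hence "w' \<in> FS (n-1) m" "n > 0" using w Cons by (auto simp: FS_def LFib_Cons)
        thus ?thesis using Cons A by auto
      next
        case B
        show ?thesis
        proof (cases w')
          case Nil thus ?thesis using w Cons B by (simp add: FS_def)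
        next
          case (Cons y w'')
          have "y = A" using w \<open>w = x # w'\<close> B Cons by (cases y) (auto simp: FS_def LFib_Cons)
          hence "w'' \<in> FS (n-1) (m-1)" "n > 0" "m > 0"
            using w \<open>w = x # w'\<close> B Cons by (auto simp: FS_def LFib_Cons)
          thus ?thesis using \<open>w = x # w'\<close> B Cons \<open>y = A\<close> by auto
        qed
      qed
    qed
  qed
  show "?R \<subseteq> ?L"
    by (auto simp: FS_def LFib_Cons Nil_LFib split: if_splits)
qed

lemma FS_card_rec:
  "card (FS n m) = (if n = 0 \<and> m = 0 then 1 else 0) + (if n = 0 \<and> m = 1 then 1 else 0)
     + (if n > 0 then card (FS (n-1) m) else 0)
     + (if n > 0 \<and> m > 0 then card (FS (n-1) (m-1)) else 0)"
proof -
  have i1: "card (Cons A ` FS (n-1) m) = card (FS (n-1) m)"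
    by (rule card_image) (simp add: inj_on_def)
  have i2: "card ((\<lambda>w. B # A # w) ` FS (n-1) (m-1)) = card (FS (n-1) (m-1))"
    by (rule card_image) (simp add: inj_on_def)
  have f1: "finite (Cons A ` FS (n-1) m)" "finite ((\<lambda>w. B # A # w) ` FS (n-1) (m-1))"
    using FS_finite by auto
  show ?thesis
    apply (subst FS_decomp)
    apply (subst card_Un_disjoint, use f1 in auto)+
    apply (use i1 i2 in auto)
    done
qed

lemma FS_card: "card (FS n m) = (n + 1) choose m"
proof (induction n arbitrary: m)
  case 0
  show ?case
  proof (cases m)
    case 0 thus ?thesis by (subst FS_card_rec) simp
  next
    case (Suc k) thus ?thesis by (subst FS_card_rec) (cases k, auto)
  qed
next
  case (Suc n)
  show ?case
  proof (cases m)
    case 0 thus ?thesis by (subst FS_card_rec) (simp add: Suc.IH)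
  next
    case (Suc k) thus ?thesis by (subst FS_card_rec) (simp add: Suc.IH)
  qed
qed

lemma coeff_Fib_eq: "coeff_Fib (n,m) = real ((n + 1) choose m)"
  using FS_card[of n m] by (simp add: coeff_Fib_def FS_def)

lemma fr_Nil [simp]: "freely_reduced []" by (simp add: freely_reduced_def)

lemma fr_Cons: "freely_reduced (x # w) \<longleftrightarrow>
    freely_reduced w \<and> (w = [] \<or> \<not> (fst x = fst (hd w) \<and> snd x \<noteq> snd (hd w)))"
proof
  assume h: "freely_reduced (x # w)"
  have "freely_reduced w" unfolding freely_reduced_def
  proof (intro allI impI)
    fix i assume "Suc i < length w"
    thus "\<not> (fst (w ! i) = fst (w ! Suc i) \<and> snd (w ! i) \<noteq> snd (w ! Suc i))"
      using h[unfolded freely_reduced_def, rule_format, of "Suc i"] by simp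
  qed
  moreover have "w = [] \<or> \<not> (fst x = fst (hd w) \<and> snd x \<noteq> snd (hd w))"
  proof (cases w)
    case Nil thus ?thesis by simp
  next
    case (Cons y w')
    thus ?thesis using h[unfolded freely_reduced_def, rule_format, of 0] by simp
  qed
  ultimately show "freely_reduced w \<and> (w = [] \<or> \<not> (fst x = fst (hd w) \<and> snd x \<noteq> snd (hd w)))" by blast
next
  assume h: "freely_reduced w \<and> (w = [] \<or> \<not> (fst x = fst (hd w) \<and> snd x \<noteq> snd (hd w)))"
  show "freely_reduced (x # w)" unfolding freely_reduced_def
  proof (intro allI impI)
    fix i assume i: "Suc i < length (x # w)"
    show "\<not> (fst ((x # w) ! i) = fst ((x # w) ! Suc i) \<and> snd ((x # w) ! i) \<noteq> snd ((x # w) ! Suc i))"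
    proof (cases i)
      case 0
      then obtain y w' where "w = y # w'" using i by (cases w) auto
      thus ?thesis using h 0 by simp
    next
      case (Suc k)
      thus ?thesis using h i unfolding freely_reduced_def by simp
    qed
  qed
qed

lemma occ_simps [simp]:
  "occ g [] = 0"
  "occ g (x # w) = (if fst x = g then Suc (occ g w) else occ g w)"
  by (simp_all add: occ_def)

lemma length_occ: "length w = occ A w + occ B w"
proof (induction w)
  case Nil thus ?case by simp
next
  case (Cons y w) thus ?case by (cases "fst y") auto
qed

lemma finite_letter: "finite (UNIV :: letter set)"
proof -
  have "finite ((UNIV :: gen set) \<times> (UNIV :: bool set))"
    by (rule finite_cartesian_product[OF finite_gen]) simp
  thus ?thesis by (simp only: UNIV_Times_UNIV)
qed

lemma card_Un4:
  assumes "finite Z" "finite P" "finite Q" "finite R"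
    "Z \<inter> P = {}" "Z \<inter> Q = {}" "Z \<inter> R = {}" "P \<inter> Q = {}" "P \<inter> R = {}" "Q \<inter> R = {}"
  shows "card (Z \<union> P \<union> Q \<union> R) = card Z + card P + card Q + card R"
  using assms by (simp add: card_Un_disjoint Int_Un_distrib2)

lemma card_Un5:
  assumes "finite Z" "finite P" "finite Q" "finite R" "finite T"
    "Z \<inter> P = {}" "Z \<inter> Q = {}" "Z \<inter> R = {}" "Z \<inter> T = {}" "P \<inter> Q = {}" "P \<inter> R = {}" "P \<inter> T = {}"
    "Q \<inter> R = {}" "Q \<inter> T = {}" "R \<inter> T = {}"
  shows "card (Z \<union> P \<union> Q \<union> R \<union> T) = card Z + card P + card Q + card R + card T"
  using assms by (simp add: card_Un_disjoint Int_Un_distrib2)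

definition WS :: "nat \<Rightarrow> nat \<Rightarrow> letter list set" where
  "WS n m = {w. freely_reduced w \<and> occ A w = n \<and> occ B w = m}"

definition SS :: "letter \<Rightarrow> nat \<Rightarrow> nat \<Rightarrow> letter list set" where
  "SS x n m = {w \<in> WS n m. w \<noteq> [] \<and> hd w = x}"

lemma WS_finite: "finite (WS n m)"
proof (rule finite_subset)
  show "WS n m \<subseteq> {w. set w \<subseteq> UNIV \<and> length w = n + m}"
    by (auto simp: WS_def length_occ)
  show "finite {w. set w \<subseteq> (UNIV :: letter set) \<and> length w = n + m}"
    by (rule finite_lists_length_eq) (rule finite_letter)
qed

lemma SS_finite: "finite (SS x n m)"
  by (rule finite_subset[OF _ WS_finite[of n m]]) (auto simp: SS_def)

lemma letter_cases: "x = (A,True) \<or> x = (A,False) \<or> x = (B,True) \<or> x = (B,False)"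
  by (cases x; cases "fst x") auto

lemma WS_decomp: "WS n m = (if n = 0 \<and> m = 0 then {[]} else {}) \<union> SS (A,True) n m \<union> SS (A,False) n m
    \<union> SS (B,True) n m \<union> SS (B,False) n m"
proof -
  have "w \<in> SS (A,True) n m \<or> w \<in> SS (A,False) n m \<or> w \<in> SS (B,True) n m \<or> w \<in> SS (B,False) n m"
    if "w \<in> WS n m" "w \<noteq> []" for w
    using that letter_cases[of "hd w"] by (auto simp: SS_def)
  moreover have "[] \<in> WS n m \<longleftrightarrow> n = 0 \<and> m = 0" by (auto simp: WS_def)
  ultimately show ?thesis by (auto simp: SS_def)
qed

lemma card_WS: "card (WS n m) = (if n = 0 \<and> m = 0 then 1 else 0) + card (SS (A,True) n m)
   + card (SS (A,False) n m) + card (SS (B,True) n m) + card (SS (B,False) n m)"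
proof -
  have d: "SS x n m \<inter> SS y n m = {}" if "x \<noteq> y" for x y using that by (auto simp: SS_def)
  have e: "[] \<notin> SS x n m" for x by (simp add: SS_def)
  have z: "(if n = 0 \<and> m = 0 then {[]} else {}) \<inter> SS x n m = {}" for x using e[of x] by auto
  have cz: "card (if n = 0 \<and> m = 0 then {[]} else {}) = (if n = 0 \<and> m = 0 then 1 else 0)" by simp
  show ?thesis
    apply (subst WS_decomp)
    apply (subst card_Un5)
    apply (simp_all only: SS_finite d z cz prod.inject gen.distinct bool.distinct simp_thms)
    apply simp
    done
qed

lemma SS_A_zero: "SS (A,s) 0 m = {}"
  by (auto simp: SS_def WS_def neq_Nil_conv)

lemma SS_B_zero: "SS (B,s) n 0 = {}"
  by (auto simp: SS_def WS_def neq_Nil_conv)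

lemma SS_A_rec: "SS (A,s) (Suc n) m = Cons (A,s) ` ((if n = 0 \<and> m = 0 then {[]} else {}) \<union> SS (A,s) n m
    \<union> SS (B,True) n m \<union> SS (B,False) n m)" (is "?L = ?R")
proof
  show "?L \<subseteq> ?R"
  proof
    fix w assume w: "w \<in> ?L"
    then obtain w' where w': "w = (A,s) # w'" by (auto simp: SS_def neq_Nil_conv)
    have fr: "freely_reduced w'" and hdc: "w' = [] \<or> \<not> (A = fst (hd w') \<and> s \<noteq> snd (hd w'))"
      and oc: "occ A w' = n" "occ B w' = m"
      using w w' by (auto simp: SS_def WS_def fr_Cons)
    have "w' \<in> (if n = 0 \<and> m = 0 then {[]} else {}) \<union> SS (A,s) n m \<union> SS (B,True) n m \<union> SS (B,False) n m"
    proof (cases w')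
      case Nil thus ?thesis using oc by simp
    next
      case (Cons y w'')
      have "y = (A,s) \<or> y = (B,True) \<or> y = (B,False)"
        using hdc Cons letter_cases[of y] by auto
      thus ?thesis using fr oc Cons by (auto simp: SS_def WS_def)
    qed
    thus "w \<in> ?R" using w' by blast
  qed
  show "?R \<subseteq> ?L"
    by (auto simp: SS_def WS_def fr_Cons split: if_splits)
qed

lemma SS_B_rec: "SS (B,s) n (Suc m) = Cons (B,s) ` ((if n = 0 \<and> m = 0 then {[]} else {}) \<union> SS (B,s) n m
    \<union> SS (A,True) n m \<union> SS (A,False) n m)" (is "?L = ?R")
proof
  show "?L \<subseteq> ?R"
  proof
    fix w assume w: "w \<in> ?L"
    then obtain w' where w': "w = (B,s) # w'" by (auto simp: SS_def neq_Nil_conv)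
    have fr: "freely_reduced w'" and hdc: "w' = [] \<or> \<not> (B = fst (hd w') \<and> s \<noteq> snd (hd w'))"
      and oc: "occ A w' = n" "occ B w' = m"
      using w w' by (auto simp: SS_def WS_def fr_Cons)
    have "w' \<in> (if n = 0 \<and> m = 0 then {[]} else {}) \<union> SS (B,s) n m \<union> SS (A,True) n m \<union> SS (A,False) n m"
    proof (cases w')
      case Nil thus ?thesis using oc by simp
    next
      case (Cons y w'')
      have "y = (B,s) \<or> y = (A,True) \<or> y = (A,False)"
        using hdc Cons letter_cases[of y] by auto
      thus ?thesis using fr oc Cons by (auto simp: SS_def WS_def)
    qed
    thus "w \<in> ?R" using w' by blast
  qed
  show "?R \<subseteq> ?L"
    by (auto simp: SS_def WS_def fr_Cons split: if_splits)
qed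

lemma card_SS_A: "card (SS (A,s) (Suc n) m) = (if n = 0 \<and> m = 0 then 1 else 0) + card (SS (A,s) n m)
    + card (SS (B,True) n m) + card (SS (B,False) n m)"
proof -
  have d: "SS x n m \<inter> SS y n m = {}" if "x \<noteq> y" for x y using that by (auto simp: SS_def)
  have e: "[] \<notin> SS x n m" for x by (simp add: SS_def)
  have z: "(if n = 0 \<and> m = 0 then {[]} else {}) \<inter> SS x n m = {}" for x using e[of x] by auto
  have cz: "card (if n = 0 \<and> m = 0 then {[]} else {}) = (if n = 0 \<and> m = 0 then 1 else 0)" by simp
  have "card (SS (A,s) (Suc n) m) = card ((if n = 0 \<and> m = 0 then {[]} else {}) \<union> SS (A,s) n m
    \<union> SS (B,True) n m \<union> SS (B,False) n m)"
    unfolding SS_A_rec by (rule card_image) (simp add: inj_on_def)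
  also have "\<dots> = (if n = 0 \<and> m = 0 then 1 else 0) + card (SS (A,s) n m)
    + card (SS (B,True) n m) + card (SS (B,False) n m)"
    apply (subst card_Un4)
    apply (simp_all only: SS_finite d z cz prod.inject gen.distinct bool.distinct simp_thms)
    apply simp
    done
  finally show ?thesis .
qed

lemma card_SS_B: "card (SS (B,s) n (Suc m)) = (if n = 0 \<and> m = 0 then 1 else 0) + card (SS (B,s) n m)
    + card (SS (A,True) n m) + card (SS (A,False) n m)"
proof -
  have d: "SS x n m \<inter> SS y n m = {}" if "x \<noteq> y" for x y using that by (auto simp: SS_def)
  have e: "[] \<notin> SS x n m" for x by (simp add: SS_def)
  have z: "(if n = 0 \<and> m = 0 then {[]} else {}) \<inter> SS x n m = {}" for x using e[of x] by auto
  have cz: "card (if n = 0 \<and> m = 0 then {[]} else {}) = (if n = 0 \<and> m = 0 then 1 else 0)" by simp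
  have "card (SS (B,s) n (Suc m)) = card ((if n = 0 \<and> m = 0 then {[]} else {}) \<union> SS (B,s) n m
    \<union> SS (A,True) n m \<union> SS (A,False) n m)"
    unfolding SS_B_rec by (rule card_image) (simp add: inj_on_def)
  also have "\<dots> = (if n = 0 \<and> m = 0 then 1 else 0) + card (SS (B,s) n m)
    + card (SS (A,True) n m) + card (SS (A,False) n m)"
    apply (subst card_Un4)
    apply (simp_all only: SS_finite d z cz prod.inject gen.distinct bool.distinct simp_thms)
    apply simp
    done
  finally show ?thesis .
qed

lemma coeff_F2_eq: "coeff_F2 (n,m) = real (card (WS n m))"
  by (simp add: coeff_F2_def WS_def)

lemma SS_ub:
  fixes x y cA cB :: real
  assumes x: "x > 0" and y: "y > 0" and hA: "x * (1 + cA + 2*cB) \<le> cA" and hB: "y * (1 + cB + 2*cA) \<le> cB"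
    and cA: "cA \<ge> 0" and cB: "cB \<ge> 0"
  shows "\<forall>n m s. n + m = N \<longrightarrow> real (card (SS (A,s) n m)) * x^n * y^m \<le> cA
     \<and> real (card (SS (B,s) n m)) * x^n * y^m \<le> cB"
proof (induction N)
  case 0
  thus ?case using cA cB by (auto simp: SS_A_zero SS_B_zero)
next
  case (Suc N)
  show ?case
  proof (intro allI impI conjI)
    fix n m s assume nm: "n + m = Suc N"
    show "real (card (SS (A,s) n m)) * x^n * y^m \<le> cA"
    proof (cases n)
      case 0 thus ?thesis using cA by (simp add: SS_A_zero)
    next
      case (Suc n')
      have IH: "real (card (SS (A,s) n' m)) * x^n' * y^m \<le> cA"
          "real (card (SS (B,True) n' m)) * x^n' * y^m \<le> cB"
          "real (card (SS (B,False) n' m)) * x^n' * y^m \<le> cB"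
        using Suc.IH nm Suc by auto
      have I: "(if n' = 0 \<and> m = 0 then 1 else 0) * x^n' * y^m \<le> (1::real)" by simp
      have "real (card (SS (A,s) n m)) * x^n * y^m =
        x * ((if n' = 0 \<and> m = 0 then 1 else 0) * x^n' * y^m + real (card (SS (A,s) n' m)) * x^n' * y^m
          + real (card (SS (B,True) n' m)) * x^n' * y^m + real (card (SS (B,False) n' m)) * x^n' * y^m)"
        unfolding Suc card_SS_A by (simp add: algebra_simps)
      also have "\<dots> \<le> x * (1 + cA + cB + cB)"
        using IH I x by (intro mult_left_mono) auto
      also have "\<dots> = x * (1 + cA + 2*cB)" by simp
      also have "\<dots> \<le> cA" by (rule hA)
      finally show ?thesis .
    qed
  next
    fix n m s assume nm: "n + m = Suc N"
    show "real (card (SS (B,s) n m)) * x^n * y^m \<le> cB"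
    proof (cases m)
      case 0 thus ?thesis using cB by (simp add: SS_B_zero)
    next
      case (Suc m')
      have IH: "real (card (SS (B,s) n m')) * x^n * y^m' \<le> cB"
          "real (card (SS (A,True) n m')) * x^n * y^m' \<le> cA"
          "real (card (SS (A,False) n m')) * x^n * y^m' \<le> cA"
        using Suc.IH nm Suc by auto
      have I: "(if n = 0 \<and> m' = 0 then 1 else 0) * x^n * y^m' \<le> (1::real)" by simp
      have "real (card (SS (B,s) n m)) * x^n * y^m =
        y * ((if n = 0 \<and> m' = 0 then 1 else 0) * x^n * y^m' + real (card (SS (B,s) n m')) * x^n * y^m'
          + real (card (SS (A,True) n m')) * x^n * y^m' + real (card (SS (A,False) n m')) * x^n * y^m')"
        unfolding Suc card_SS_B by (simp add: algebra_simps)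
      also have "\<dots> \<le> y * (1 + cB + cA + cA)"
        using IH I y by (intro mult_left_mono) auto
      also have "\<dots> = y * (1 + cB + 2*cA)" by simp
      also have "\<dots> \<le> cB" by (rule hB)
      finally show ?thesis .
    qed
  qed
qed

lemma coeff_F2_ub:
  fixes x y :: real
  assumes x: "x > 0" and y: "y > 0" and D: "1 - x - y - 3*x*y > 0"
  shows "coeff_F2 (n,m) * x^n * y^m \<le> 1 + 2 * (x*(1+y)/(1 - x - y - 3*x*y)) + 2 * (y*(1+x)/(1 - x - y - 3*x*y))"
proof -
  define D where "D = 1 - x - y - 3*x*y"
  define cA where "cA = x*(1+y)/D"
  define cB where "cB = y*(1+x)/D"
  have Dp: "D > 0" using D by (simp add: D_def)
  have hA: "x * (1 + cA + 2*cB) \<le> cA"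
  proof -
    have e: "D + x*(1+y) + 2*(y*(1+x)) = 1 + y" by (simp add: D_def algebra_simps)
    have "1 + cA + 2*cB = (D + x*(1+y) + 2*(y*(1+x)))/D" using Dp by (simp add: cA_def cB_def field_simps)
    hence "x * (1 + cA + 2*cB) = x * (1 + y) / D" unfolding e by simp
    hence "x * (1 + cA + 2*cB) = cA" by (simp add: cA_def)
    thus ?thesis by simp
  qed
  have hB: "y * (1 + cB + 2*cA) \<le> cB"
  proof -
    have e: "D + y*(1+x) + 2*(x*(1+y)) = 1 + x" by (simp add: D_def algebra_simps)
    have "1 + cB + 2*cA = (D + y*(1+x) + 2*(x*(1+y)))/D" using Dp by (simp add: cA_def cB_def field_simps)
    hence "y * (1 + cB + 2*cA) = y * (1 + x) / D" unfolding e by simp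
    hence "y * (1 + cB + 2*cA) = cB" by (simp add: cB_def)
    thus ?thesis by simp
  qed
  have cA: "cA \<ge> 0" "cB \<ge> 0" using x y Dp by (simp_all add: cA_def cB_def)
  have b: "\<And>s. real (card (SS (A,s) n m)) * x^n * y^m \<le> cA \<and> real (card (SS (B,s) n m)) * x^n * y^m \<le> cB"
    using SS_ub[OF x y hA hB cA, of "n+m"] by blast
  have I: "(if n = 0 \<and> m = 0 then 1 else 0) * x^n * y^m \<le> (1::real)" by simp
  have "coeff_F2 (n,m) * x^n * y^m = (if n = 0 \<and> m = 0 then 1 else 0) * x^n * y^m
     + real (card (SS (A,True) n m)) * x^n * y^m + real (card (SS (A,False) n m)) * x^n * y^m
     + real (card (SS (B,True) n m)) * x^n * y^m + real (card (SS (B,False) n m)) * x^n * y^m"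
    unfolding coeff_F2_eq card_WS by (simp add: algebra_simps)
  also have "\<dots> \<le> 1 + cA + cA + cB + cB" using b[of True] b[of False] I by linarith
  finally show ?thesis by (simp add: cA_def cB_def D_def)
qed

lemma SS_B0_ge1: "1 \<le> card (SS (B,s) 0 (Suc m))"
proof (induction m)
  case 0 thus ?case by (subst card_SS_B) simp
next
  case (Suc m) thus ?case by (subst card_SS_B) simp
qed

lemma ar_L1: "(P::nat) = 2*Q \<Longrightarrow> P*(a+b)*c = P*b*c + Q*a*c + Q*a*c"
  by (simp add: algebra_simps)

lemma ar_L2: "(P::nat) = 2*Q \<Longrightarrow> P*a*(b + c) = P*a*c + 2*(Q*a*b)"
  by (simp add: algebra_simps)

lemma ar_L3: "(X::nat) \<le> U \<Longrightarrow> Y \<le> V \<Longrightarrow> Y \<le> W \<Longrightarrow> X + 2*Y \<le> U + V + W"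
  by linarith

lemma ar_L4: "(X::nat) \<le> U \<Longrightarrow> Y \<le> V \<Longrightarrow> Y \<le> W \<Longrightarrow> X + Y + Y \<le> U + V + W"
  by linarith

lemma SS_lb:
  "(\<forall>m j s. 2^(2*j+1) * (n choose j) * (m choose j) \<le> card (SS (A,s) (Suc n) (Suc m))) \<and>
   (\<forall>m j s. 2^(2*j+2) * (n choose j) * (m choose Suc j) \<le> card (SS (B,s) (Suc n) (Suc m)))"
proof (induction n)
  case 0
  have i: "\<forall>m j s. 2^(2*j+1) * (0 choose j) * (m choose j) \<le> card (SS (A,s) (Suc 0) (Suc m))"
  proof (intro allI)
    fix m j s
    have "card (SS (A,s) (Suc 0) (Suc m)) \<ge> 2"
      using SS_B0_ge1[of True m] SS_B0_ge1[of False m] by (subst card_SS_A) simp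
    thus "2^(2*j+1) * (0 choose j) * (m choose j) \<le> card (SS (A,s) (Suc 0) (Suc m))"
      by (cases j) auto
  qed
  have ii: "2^(2*j+2) * (0 choose j) * (m choose Suc j) \<le> card (SS (B,s) (Suc 0) (Suc m))" for m j s
  proof (induction m arbitrary: j s)
    case 0 thus ?case by simp
  next
    case (Suc m)
    have "2^(2*j+2) * (0 choose j) * (Suc m choose Suc j) =
       2^(2*j+2) * (0 choose j) * (m choose Suc j) + 2 * (2^(2*j+1) * (0 choose j) * (m choose j))"
      unfolding binomial_Suc_Suc by (rule ar_L2) simp
    also have "\<dots> \<le> card (SS (B,s) (Suc 0) (Suc m)) + card (SS (A,True) (Suc 0) (Suc m))
        + card (SS (A,False) (Suc 0) (Suc m))"
      using Suc.IH[of j s] i by (intro ar_L3) blast+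
    also have "\<dots> = card (SS (B,s) (Suc 0) (Suc (Suc m)))" by (subst (2) card_SS_B) simp
    finally show ?case .
  qed
  show ?case using i ii by blast
next
  case (Suc n)
  have i: "\<forall>m j s. 2^(2*j+1) * (Suc n choose j) * (m choose j) \<le> card (SS (A,s) (Suc (Suc n)) (Suc m))"
  proof (intro allI)
    fix m j s
    have rec: "card (SS (A,s) (Suc (Suc n)) (Suc m)) = card (SS (A,s) (Suc n) (Suc m))
       + card (SS (B,True) (Suc n) (Suc m)) + card (SS (B,False) (Suc n) (Suc m))"
      by (subst card_SS_A) simp
    show "2^(2*j+1) * (Suc n choose j) * (m choose j) \<le> card (SS (A,s) (Suc (Suc n)) (Suc m))"
    proof (cases j)
      case 0
      have "2^(2*0+1) * (n choose 0) * (m choose 0) \<le> card (SS (A,s) (Suc n) (Suc m))"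
        using Suc.IH by blast
      thus ?thesis using rec 0 by simp
    next
      case (Suc k)
      have "2^(2*j+1) * (Suc n choose j) * (m choose j) =
          2^(2*j+1) * (n choose j) * (m choose j) + 2^(2*k+2) * (n choose k) * (m choose Suc k)
        + 2^(2*k+2) * (n choose k) * (m choose Suc k)"
        unfolding Suc binomial_Suc_Suc by (rule ar_L1) simp
      also have "\<dots> \<le> card (SS (A,s) (Suc n) (Suc m))
       + card (SS (B,True) (Suc n) (Suc m)) + card (SS (B,False) (Suc n) (Suc m))"
        using Suc.IH by (intro ar_L4) blast+
      finally show ?thesis using rec by simp
    qed
  qed
  have ii: "2^(2*j+2) * (Suc n choose j) * (m choose Suc j) \<le> card (SS (B,s) (Suc (Suc n)) (Suc m))" for m j s
  proof (induction m arbitrary: j s)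
    case 0 thus ?case by simp
  next
    case (Suc m)
    have "2^(2*j+2) * (Suc n choose j) * (Suc m choose Suc j) =
       2^(2*j+2) * (Suc n choose j) * (m choose Suc j) + 2 * (2^(2*j+1) * (Suc n choose j) * (m choose j))"
      by (subst binomial_Suc_Suc, rule ar_L2) simp
    also have "\<dots> \<le> card (SS (B,s) (Suc (Suc n)) (Suc m)) + card (SS (A,True) (Suc (Suc n)) (Suc m))
        + card (SS (A,False) (Suc (Suc n)) (Suc m))"
      using Suc.IH[of j s] i by (intro ar_L3) blast+
    also have "\<dots> = card (SS (B,s) (Suc (Suc n)) (Suc (Suc m)))" by (subst (2) card_SS_B) simp
    finally show ?case .
  qed
  show ?case using i ii by blast
qed

lemma coeff_F2_lb: "2^(2*j+2) * real (n choose j) * real (m choose j) \<le> coeff_F2 (Suc n, Suc m)"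
proof -
  have a: "2^(2*j+1) * (n choose j) * (m choose j) \<le> card (SS (A,s) (Suc n) (Suc m))" for s
    using SS_lb[of n] by blast
  have "2^(2*j+2) * (n choose j) * (m choose j) \<le> card (SS (A,True) (Suc n) (Suc m)) + card (SS (A,False) (Suc n) (Suc m))"
    using a[of True] a[of False] by simp
  also have "\<dots> \<le> card (WS (Suc n) (Suc m))" by (subst card_WS) simp
  finally have "real (2^(2*j+2) * (n choose j) * (m choose j)) \<le> real (card (WS (Suc n) (Suc m)))"
    by (simp only: of_nat_le_iff)
  thus ?thesis by (simp add: coeff_F2_eq)
qed

lemma psi_from_bounds:
  assumes M: "(p,q) \<in> M2"
    and lower: "\<And>C. open_cone C \<Longrightarrow> (p,q) \<in> C \<Longrightarrow> ereal L \<le> tau f C"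
    and upper: "\<And>e. e > 0 \<Longrightarrow> \<exists>C. open_cone C \<and> (p,q) \<in> C \<and> tau f C \<le> ereal (L + e)"
  shows "indicatrice f (p,q) = ereal L"
proof -
  let ?I = "(INF C \<in> {C. open_cone C \<and> (p,q) \<in> C}. tau f C)"
  have "ereal L \<le> ?I" by (rule INF_greatest) (use lower in auto)
  moreover have "?I \<le> ereal L"
  proof (rule ereal_le_epsilon2)
    fix e :: real assume e: "0 < e"
    obtain C where C: "open_cone C" "(p,q) \<in> C" "tau f C \<le> ereal (L + e)" using upper[OF e] by blast
    have "?I \<le> tau f C" by (rule INF_lower) (use C in auto)
    thus "?I \<le> ereal L + ereal e" using C by simp
  qed
  ultimately show ?thesis using indicatrice_M2[OF M] by simp
qed

lemma upper_from_gf: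
  fixes f :: "nat \<times> nat \<Rightarrow> real"
  assumes fnn: "\<And>i. 0 \<le> f i" and pq: "p + q = 1"
    and gf: "\<And>e. e > 0 \<Longrightarrow> \<exists>x y c. x > 0 \<and> y > 0 \<and> (\<forall>n m. f (n,m) * x^n * y^m \<le> c)
                 \<and> - (p * ln x) - q * ln y < L + e"
    and e: "e > 0"
  shows "\<exists>C. open_cone C \<and> (p,q) \<in> C \<and> tau f C \<le> ereal (L + e)"
proof -
  obtain x y c where xy: "x > 0" "y > 0" "\<forall>n m. f (n,m) * x^n * y^m \<le> c" "- (p * ln x) - q * ln y < L + e"
    using gf[OF e] by blast
  show ?thesis by (rule ub_generic[OF fnn xy(1,2) _ pq xy(4)]) (use xy(3) in blast)
qed

lemma floor_ratio:
  fixes c :: real assumes c: "c \<ge> 0"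
  shows "(\<lambda>N. real (nat \<lfloor>c * real N\<rfloor>) / real N) \<longlonglongrightarrow> c"
proof (rule tendsto_sandwich[of "\<lambda>N. c - 1 / real N" _ _ "\<lambda>_. c"])
  show "eventually (\<lambda>N. c - 1 / real N \<le> real (nat \<lfloor>c * real N\<rfloor>) / real N) sequentially"
    using eventually_gt_at_top[of "0::nat"]
  proof eventually_elim
    case (elim N)
    have "c * real N - 1 \<le> real (nat \<lfloor>c * real N\<rfloor>)" by linarith
    hence "(c * real N - 1) / real N \<le> real (nat \<lfloor>c * real N\<rfloor>) / real N"
      using elim by (intro divide_right_mono) auto
    thus ?case using elim by (simp add: diff_divide_distrib)
  qed
  show "eventually (\<lambda>N. real (nat \<lfloor>c * real N\<rfloor>) / real N \<le> c) sequentially"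
    using eventually_gt_at_top[of "0::nat"]
  proof eventually_elim
    case (elim N)
    have "real (nat \<lfloor>c * real N\<rfloor>) \<le> c * real N" using c by (simp add: of_nat_nat)
    thus ?case using elim by (simp add: divide_simps mult.commute)
  qed
  show "(\<lambda>N. c - 1 / real N) \<longlonglongrightarrow> c" by real_asymp
qed simp

lemma floor_le_N:
  fixes p :: real assumes "0 \<le> p" "p \<le> 1"
  shows "nat \<lfloor>p * real N\<rfloor> \<le> N"
proof -
  have "p * real N \<le> real N" using assms by (simp add: mult_left_le_one_le)
  hence "\<lfloor>p * real N\<rfloor> \<le> int N" by linarith
  thus ?thesis by simp
qed

lemma ln_over_N_sub:
  assumes "eventually (\<lambda>N. 1 \<le> k N \<and> k N \<le> N + 1) sequentially"
  shows "(\<lambda>N. ln (real (k N)) / real N) \<longlonglongrightarrow> 0"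
proof (rule tendsto_sandwich[of "\<lambda>_. 0" _ _ "\<lambda>N. ln (real N + 1) / real N"])
  show "eventually (\<lambda>N. 0 \<le> ln (real (k N)) / real N) sequentially"
    using assms by eventually_elim simp
  show "eventually (\<lambda>N. ln (real (k N)) / real N \<le> ln (real N + 1) / real N) sequentially"
    using assms
  proof eventually_elim
    case (elim N)
    have "ln (real (k N)) \<le> ln (real N + 1)" using elim by simp
    thus ?case by (simp add: divide_right_mono)
  qed
  show "(\<lambda>N. ln (real N + 1) / real N) \<longlonglongrightarrow> 0" by real_asymp
qed simp

lemma coeff_Fib_nonneg: "0 \<le> coeff_Fib i"
  by (simp add: coeff_Fib_def)

lemma fib_ub:
  fixes x y :: real
  assumes x: "x > 0" and y: "y > 0" and xy: "x * (1 + y) \<le> 1"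
  shows "coeff_Fib (n,m) * x^n * y^m \<le> 1 + y"
proof -
  have b: "real ((n+1) choose m) * y^m \<le> (1 + y)^(n+1)"
  proof (cases "m \<le> n + 1")
    case True
    have "(y + 1)^(n+1) = (\<Sum>k\<le>n+1. real ((n+1) choose k) * y^k * 1^(n+1-k))"
      by (rule binomial_ring)
    also have "\<dots> \<ge> real ((n+1) choose m) * y^m * 1^(n+1-m)"
      by (rule member_le_sum) (use True y in auto)
    finally show ?thesis by (simp add: add.commute)
  next
    case False
    hence z: "real ((n+1) choose m) * y^m = 0" by (simp add: binomial_eq_0 del: add_Suc_right Suc_eq_plus1)
    show ?thesis unfolding z using y by simp
  qed
  have "coeff_Fib (n,m) * x^n * y^m = (real ((n+1) choose m) * y^m) * x^n"
    by (simp add: coeff_Fib_eq mult_ac)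
  also have "\<dots> \<le> (1 + y)^(n+1) * x^n" using b x by (intro mult_right_mono) auto
  also have "\<dots> = (1 + y) * (x * (1 + y))^n" by (simp add: power_mult_distrib mult_ac)
  also have "\<dots> \<le> (1 + y) * 1" using x y xy by (intro mult_left_mono power_le_one) auto
  finally show ?thesis by simp
qed

lemma M2_mem: "0 \<le> p \<Longrightarrow> p \<le> 1 \<Longrightarrow> (p, 1 - p) \<in> M2"
  by (simp add: M2_def)

lemma aux_mulg: "(N::real) \<noteq> 0 \<Longrightarrow> N * (- (u * l1) - v * l2 - z / N) = - ((N * u) * l1) - (N * v) * l2 - z"
  by (simp add: field_simps)

lemma fib_big:
  fixes p :: real
  assumes p1: "1/2 < p" and p2: "p < 1"
  defines "q \<equiv> 1 - p"
  shows "psi_Fib (p,q) = ereal (p * ln (p / (p - q)) + q * ln ((p - q) / q))"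
proof -
  define L where "L = p * ln (p / (p - q)) + q * ln ((p - q) / q)"
  have q0: "q > 0" and pq: "p - q > 0" "p + q = 1" using p1 p2 by (auto simp: q_def)
  have M: "(p,q) \<in> M2" using p1 p2 unfolding q_def by (intro M2_mem) auto
  have Lalt: "- (q * ln (q / p)) - (p - q) * ln ((p - q) / p) = L"
    using q0 pq p1 by (simp add: L_def ln_div algebra_simps)
  show ?thesis unfolding psi_Fib_def L_def[symmetric]
  proof (rule psi_from_bounds[OF M])
    fix e :: real assume e: "e > 0"
    show "\<exists>C. open_cone C \<and> (p, q) \<in> C \<and> tau coeff_Fib C \<le> ereal (L + e)"
    proof (rule upper_from_gf[OF coeff_Fib_nonneg pq(2) _ e])
      fix e' :: real assume e': "e' > 0"
      define x where "x = (p - q) / p"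
      define y where "y = q / (p - q)"
      have "1 + y = p / (p - q)" using pq by (simp add: y_def field_simps)
      hence "x * (1 + y) = 1" using pq p1 by (simp add: x_def)
      hence xy: "x > 0" "y > 0" "x * (1 + y) \<le> 1" using pq q0 p1
        by (auto simp: x_def y_def)
      have "- (p * ln x) - q * ln y = L"
        using pq q0 p1 by (simp add: x_def y_def L_def ln_div algebra_simps)
      thus "\<exists>x y c. x > 0 \<and> y > 0 \<and> (\<forall>n m. coeff_Fib (n,m) * x^n * y^m \<le> c)
                 \<and> - (p * ln x) - q * ln y < L + e'"
        using xy fib_ub[OF xy] e' by (intro exI[of _ x] exI[of _ y] exI[of _ "1 + y"]) auto
    qed
  next
    fix C assume oc: "open_cone C" and pqC: "(p,q) \<in> C"
    define n where "n = (\<lambda>N. nat \<lfloor>p * real N\<rfloor>)"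
    define m where "m = (\<lambda>N. N - n N)"
    define a where "a = (\<lambda>N. real (n N) / real N)"
    define b where "b = (\<lambda>N. real (m N) / real N)"
    define g where "g = (\<lambda>N. - (b N * ln (b N / a N)) - (a N - b N) * ln ((a N - b N) / a N)
                            - ln (real (n N) + 1) / real N)"
    have nm: "n N + m N = N" for N using floor_le_N[of p N] p1 p2 by (simp add: n_def m_def)
    have ca: "a \<longlonglongrightarrow> p" unfolding a_def n_def by (rule floor_ratio) (use p1 in auto)
    have ebm: "eventually (\<lambda>N. b N = 1 - a N) sequentially"
      using eventually_gt_at_top[of "0::nat"]
    proof eventually_elim
      case (elim N)
      have "real (m N) = real N - real (n N)" using nm[of N] by (metis add_diff_cancel_left' of_nat_add)
      thus ?case using elim by (simp add: a_def b_def field_simps)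
    qed
    have "(\<lambda>N. 1 - a N) \<longlonglongrightarrow> 1 - p" by (intro tendsto_intros ca)
    hence cb: "b \<longlonglongrightarrow> q" unfolding q_def
      using ebm by (rule Lim_transform_eventually[OF _ eventually_mono]) simp
    have ev1: "eventually (\<lambda>N. b N > 0) sequentially" using cb q0 by (rule order_tendstoD)
    have "(\<lambda>N. a N - b N) \<longlonglongrightarrow> p - q" by (intro tendsto_intros ca cb)
    hence ev2: "eventually (\<lambda>N. a N - b N > 0) sequentially" using pq(1) by (rule order_tendstoD)
    have ev3: "eventually (\<lambda>N. 1 \<le> n N + 1 \<and> n N + 1 \<le> N + 1) sequentially"
      using nm by (auto intro!: always_eventually) (metis le_add1)
    have lnlim: "(\<lambda>N. ln (real (n N + 1)) / real N) \<longlonglongrightarrow> 0"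
      by (rule ln_over_N_sub[OF ev3])
    have "g \<longlonglongrightarrow> - (q * ln (q / p)) - (p - q) * ln ((p - q) / p) - 0"
      unfolding g_def using ca cb lnlim pq q0 p1
      by (intro tendsto_intros) (auto simp: add.commute)
    hence gL: "g \<longlonglongrightarrow> L" using Lalt by simp
    have ev: "eventually (\<lambda>N. 0 < coeff_Fib (n N, m N) \<and> real N * g N \<le> ln (coeff_Fib (n N, m N))) sequentially"
      using ev1 ev2 eventually_gt_at_top[of "0::nat"]
    proof eventually_elim
      case (elim N)
      have h1: "0 < real (m N)" using elim by (auto simp: b_def zero_less_divide_iff)
      have h2: "real (m N) < real (n N)" using elim by (auto simp: a_def b_def divide_less_cancel)
      have mpos: "0 < m N" and mn: "m N < n N" using h1 h2 by auto
      have Cn: "real (n N choose m N) \<le> coeff_Fib (n N, m N)"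
        unfolding coeff_Fib_eq by (simp add: binomial_right_mono)
      have Cpos: "0 < real (n N choose m N)" using mn by simp
      have cf: "0 < coeff_Fib (n N, m N)" using Cpos Cn by linarith
      have lb: "- (real (m N) * ln (real (m N) / real (n N))) - real (n N - m N) * ln (real (n N - m N) / real (n N))
          - ln (real (n N) + 1) \<le> ln (real (n N choose m N))"
        by (rule ln_binom_lower[OF mpos mn])
      have r1: "b N / a N = real (m N) / real (n N)" using elim by (simp add: a_def b_def)
      have r2: "real (n N - m N) = real N * (a N - b N)" using elim mn
        by (simp add: a_def b_def field_simps of_nat_diff)
      have r3: "(a N - b N) / a N = real (n N - m N) / real (n N)" using elim mn
        by (simp add: a_def b_def field_simps of_nat_diff)
      have e1: "real N * b N = real (m N)" using elim by (simp add: b_def)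
      have "real N * g N = - ((real N * b N) * ln (b N / a N))
          - (real N * (a N - b N)) * ln ((a N - b N) / a N) - ln (real (n N) + 1)"
        unfolding g_def using elim by (intro aux_mulg) simp
      also have "\<dots> = - (real (m N) * ln (real (m N) / real (n N)))
          - real (n N - m N) * ln (real (n N - m N) / real (n N)) - ln (real (n N) + 1)"
        unfolding e1 r1 r3 r2[symmetric] ..
      also have "\<dots> \<le> ln (real (n N choose m N))" by (rule lb)
      also have "\<dots> \<le> ln (coeff_Fib (n N, m N))" using Cpos Cn cf by (subst ln_le_cancel_iff) auto
      finally show ?case using cf by simp
    qed
    show "ereal L \<le> tau coeff_Fib C"
      by (rule lb_generic[OF coeff_Fib_nonneg oc pqC pq(2) nm _ gL ev])
        (simp add: a_def[symmetric] ca)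
  qed
qed

lemma fib_half: "psi_Fib (1/2, 1/2) = ereal 0"
proof -
  have M: "(1/2::real, 1/2) \<in> M2" by (simp add: M2_def)
  show ?thesis unfolding psi_Fib_def
  proof (rule psi_from_bounds[OF M])
    fix e :: real assume e: "e > 0"
    show "\<exists>C. open_cone C \<and> (1/2, 1/2) \<in> C \<and> tau coeff_Fib C \<le> ereal (0 + e)"
    proof (rule upper_from_gf[OF coeff_Fib_nonneg _ _ e])
      show "1/2 + 1/2 = (1::real)" by simp
      fix e' :: real assume e': "e' > 0"
      define y where "y = 1 / e'"
      define x where "x = 1 / (1 + y)"
      have y: "y > 0" using e' by (simp add: y_def)
      have xy: "x > 0" "x * (1 + y) \<le> 1" using y by (auto simp: x_def)
      have "- (1/2 * ln x) - 1/2 * ln y = 1/2 * (ln (1 + y) - ln y)"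
        using y by (simp add: x_def ln_div algebra_simps)
      also have "ln (1 + y) - ln y = ln (1 + 1 / y)"
      proof -
        have "1 + 1/y = (1+y)/y" using y by (simp add: field_simps)
        thus ?thesis using y by (simp add: ln_div)
      qed
      also have "ln (1 + 1/y) \<le> 1 / y" using y by (intro ln_add_one_self_le_self) simp
      hence "1/2 * ln (1 + 1/y) < 0 + e'" using e' by (simp add: y_def)
      finally have "- (1/2 * ln x) - 1/2 * ln y < 0 + e'" .
      thus "\<exists>x y c. x > 0 \<and> y > 0 \<and> (\<forall>n m. coeff_Fib (n,m) * x^n * y^m \<le> c)
                 \<and> - (1/2 * ln x) - 1/2 * ln y < 0 + e'"
        using xy y fib_ub[OF xy(1) y xy(2)] by (intro exI[of _ x] exI[of _ y] exI[of _ "1 + y"]) auto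
    qed
  next
    fix C assume oc: "open_cone C" and pqC: "(1/2::real, 1/2) \<in> C"
    define n where "n = (\<lambda>N. nat \<lfloor>1/2 * real N\<rfloor>)"
    define m where "m = (\<lambda>N. N - n N)"
    have nm: "n N + m N = N" for N using floor_le_N[of "1/2" N] by (simp add: n_def m_def)
    have ca: "(\<lambda>N. real (n N) / real N) \<longlonglongrightarrow> 1/2" unfolding n_def by (rule floor_ratio) simp
    have ev: "eventually (\<lambda>N. 0 < coeff_Fib (n N, m N) \<and> real N * 0 \<le> ln (coeff_Fib (n N, m N))) sequentially"
    proof (rule always_eventually, intro allI)
      fix N
      have "real N / 2 - 1 < real (n N)" unfolding n_def by linarith
      hence "m N \<le> n N + 1" using nm[of N] by linarith
      hence "0 < (n N + 1) choose m N" by (rule zero_less_binomial)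
      hence "1 \<le> (n N + 1) choose m N" by linarith
      hence "1 \<le> coeff_Fib (n N, m N)" unfolding coeff_Fib_eq
        by (metis of_nat_1 of_nat_le_iff)
      thus "0 < coeff_Fib (n N, m N) \<and> real N * 0 \<le> ln (coeff_Fib (n N, m N))" by simp
    qed
    show "ereal 0 \<le> tau coeff_Fib C"
      by (rule lb_generic[OF coeff_Fib_nonneg oc pqC _ nm ca tendsto_const ev]) simp
  qed
qed

lemma fib_small:
  fixes p :: real
  assumes p0: "0 < p" and p1: "p < 1/2"
  shows "psi_Fib (p, 1 - p) = -\<infinity>"
proof -
  define q where "q = 1 - p"
  define d where "d = (q - 1/2) / 2"
  have d: "d > 0" using p1 by (simp add: d_def q_def)
  have M: "(p,q) \<in> M2" using p0 p1 unfolding q_def by (intro M2_mem) auto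
  define C where "C = {z::real\<times>real. 0 < fst z + snd z \<and> 0 * fst z + (-1) * snd z < (-(1/2 + d)) * (fst z + snd z)}"
  have oc: "open_cone C" unfolding C_def by (rule open_cone_halfplanes)
  have pqC: "(p,q) \<in> C"
  proof -
    have pq1: "p + q = 1" by (simp add: q_def)
    have "q > 1/2 + d" using p1 unfolding d_def q_def by (simp add: field_simps)
    hence "0 * p + (-1) * q < (-(1/2 + d)) * (p + q)" using pq1 by simp
    thus ?thesis using pq1 unfolding C_def mem_Collect_eq fst_conv snd_conv by simp
  qed
  have "eventually (\<lambda>R. (\<Sum>i\<in>shell C R. coeff_Fib i) = 0) at_top"
    using eventually_ge_at_top[of "1 / d"]
  proof eventually_elim
    case (elim R)
    have "coeff_Fib i = 0" if i: "i \<in> shell C R" for i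
    proof -
      obtain n m where nm: "i = (n,m)" by force
      have c0: "- real m < (- (1/2) - d) * (real n + real m)" and c2: "R \<le> real n + real m"
        using i nm by (auto simp: shell_def C_def)
      have eq: "(- (1/2) - d) * (real n + real m) = - ((1/2 + d) * (real n + real m))"
        by (simp add: algebra_simps)
      have c1: "real m > (1/2 + d) * (real n + real m)" using c0 eq by linarith
      have "d * R \<ge> 1" using elim d by (simp add: field_simps)
      hence "d * (real n + real m) \<ge> 1" using c2 d by (meson mult_left_mono order_trans less_imp_le)
      moreover have "2 * ((1/2 + d) * (real n + real m)) < 2 * real m" using c1 by simp
      moreover have "2 * ((1/2 + d) * (real n + real m)) = real n + real m + 2 * (d * (real n + real m))"
        by (simp add: algebra_simps)
      ultimately have "real m > real n + 1" by linarith
      hence "n + 1 < m" by linarith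
      thus ?thesis unfolding nm coeff_Fib_eq by (simp add: binomial_eq_0)
    qed
    thus ?case by simp
  qed
  hence tm: "tau coeff_Fib C = -\<infinity>" by (rule minf_generic)
  have "(INF C \<in> {C. open_cone C \<and> (p,q) \<in> C}. tau coeff_Fib C) \<le> tau coeff_Fib C"
    by (rule INF_lower) (use oc pqC in auto)
  hence "(INF C \<in> {C. open_cone C \<and> (p,q) \<in> C}. tau coeff_Fib C) = -\<infinity>" using tm by simp
  thus ?thesis using indicatrice_M2[OF M] by (simp add: psi_Fib_def q_def)
qed

lemma f2_alg:
  fixes p q :: real
  assumes p: "p > 0" and q: "q > 0"
  defines "s \<equiv> sqrt (p\<^sup>2 - p * q + q\<^sup>2)"
  defines "u \<equiv> 2 * q - p + 2 * s" and "v \<equiv> 2 * p - q + 2 * s"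
  shows "u - p > 0" "v - q > 0" "(u - p) * (v - q) = 4 * p * q" "p * (u - p) * v = q * (v - q) * u"
proof -
  have pos: "p\<^sup>2 - p * q + q\<^sup>2 \<ge> 0"
  proof -
    have e: "p\<^sup>2 - p * q + q\<^sup>2 = (p - q)^2 + p * q" by (simp add: power2_eq_square algebra_simps)
    show ?thesis unfolding e by (rule add_nonneg_nonneg) (use p q in auto)
  qed
  have s0: "s \<ge> 0" using pos by (simp add: s_def)
  have s2: "s^2 = p\<^sup>2 - p * q + q\<^sup>2" using pos by (simp add: s_def)
  have "\<bar>p - q\<bar>^2 = s^2 - p * q" using s2 by (simp add: power2_eq_square algebra_simps)
  moreover have "0 < p * q" using p q by simp
  ultimately have "\<bar>p - q\<bar>^2 < s^2" by linarith
  hence lt: "\<bar>p - q\<bar> < s" using s0 by (rule power_less_imp_less_base)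
  show "u - p > 0" using lt by (simp add: u_def)
  show "v - q > 0" using lt by (simp add: v_def)
  have "(u - p) * (v - q) = 4 * (s^2 - (p - q)^2)"
    by (simp add: u_def v_def power2_eq_square algebra_simps)
  thus "(u - p) * (v - q) = 4 * p * q" using s2 by (simp add: power2_eq_square algebra_simps)
  have "p * (u - p) * v - q * (v - q) * u = 2 * (q - p) * (2 * p\<^sup>2 - 2 * p * q + 2 * q\<^sup>2 - 2 * s^2)"
    by (simp add: u_def v_def power2_eq_square algebra_simps)
  thus "p * (u - p) * v = q * (v - q) * u" using s2 by simp
qed

lemma ln4: "ln (4::real) = 2 * ln 2"
  using ln_realpow[of 2 2] by simp

lemma coeff_F2_nonneg: "0 \<le> coeff_F2 i"
  by (simp add: coeff_F2_def)

lemma aux_mulg2: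
  "(N::real) \<noteq> 0 \<Longrightarrow>
    N * (2 * (a + 1 / N) * l0 - a * l1 - b * l2 - z1 / N - a * l3 - c * l4 - z2 / N)
    = 2 * (N * a + 1) * l0 - (N * a) * l1 - (N * b) * l2 - z1 - (N * a) * l3 - (N * c) * l4 - z2"
  by (simp add: field_simps)

lemma ln_binom_lower':
  fixes M K :: nat
  assumes "0 < K" "K < M"
  shows "- (real K * ln (real K / real M)) - real (M-K) * ln (real (M-K) / real M) - ln (real M + 1)
    \<le> ln (real (M choose K))"
  using ln_binom_lower[OF assms] .

lemma f2_interior:
  fixes p q :: real
  assumes p: "p > 0" and q: "q > 0" and pq: "p + q = 1"
  shows "psi_F2 (p,q) = ereal (entropy2 (p,q) + p * ln (2 * q - p + 2 * sqrt (p\<^sup>2 - p * q + q\<^sup>2))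
                     + q * ln (2 * p - q + 2 * sqrt (p\<^sup>2 - p * q + q\<^sup>2)))"
proof -
  define s where "s = sqrt (p\<^sup>2 - p * q + q\<^sup>2)"
  define u where "u = 2 * q - p + 2 * s"
  define v where "v = 2 * p - q + 2 * s"
  define L where "L = entropy2 (p,q) + p * ln u + q * ln v"
  note alg = f2_alg[OF p q, folded s_def, folded u_def v_def]
  have u: "u > 0" and v: "v > 0" using alg(1,2) p q by auto
  define x where "x = p / u"
  define y where "y = q / v"
  define t where "t = p * (1 - x)"
  have x: "0 < x" "x < 1" using p u alg(1) by (auto simp: x_def field_simps)
  have y: "0 < y" "y < 1" using q v alg(2) by (auto simp: y_def field_simps)
  have omx: "1 - x = (u - p) / u" using u by (simp add: x_def field_simps)
  have omy: "1 - y = (v - q) / v" using v by (simp add: y_def field_simps)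
  have hxy: "(1 - x) * (1 - y) = 4 * x * y"
    unfolding omx omy using alg(3) u v by (simp add: x_def y_def field_simps)
  have hD: "1 - x - y - 3 * x * y = 0" using hxy by (simp add: algebra_simps)
  have tq: "t = q * (1 - y)"
    unfolding t_def omx omy using alg(4) u v by (simp add: field_simps)
  have t0: "t > 0" using p x by (simp add: t_def)
  have tp: "t < p" using p x by (simp add: t_def)
  have tqq: "t < q" using q y tq by simp
  have hL: "L = - (p * ln x) - q * ln y"
    using p q u v by (simp add: L_def x_def y_def entropy2_def ln_div algebra_simps)
  have M: "(p,q) \<in> M2" using p q pq by (simp add: M2_def)
  have key: "2 * ln 2 + ln x + ln y = ln (1 - x) + ln (1 - y)"
  proof -
    have "ln (4 * x * y) = ln ((1 - x) * (1 - y))" by (simp only: hxy)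
    moreover have "ln (4 * x * y) = ln 4 + ln x + ln y" using x y by (simp add: ln_mult)
    moreover have "ln ((1 - x) * (1 - y)) = ln (1 - x) + ln (1 - y)" using x y by (simp add: ln_mult)
    moreover have "ln (4::real) = 2 * ln 2"
      using ln_realpow[of 2 2] by simp
    ultimately show ?thesis by linarith
  qed
  show ?thesis unfolding psi_F2_def s_def[symmetric] u_def[symmetric] v_def[symmetric] L_def[symmetric]
  proof (rule psi_from_bounds[OF M])
    fix e :: real assume e: "e > 0"
    show "\<exists>C. open_cone C \<and> (p, q) \<in> C \<and> tau coeff_F2 C \<le> ereal (L + e)"
    proof (rule upper_from_gf[OF coeff_F2_nonneg pq _ e])
      fix e' :: real assume e': "e' > 0"
      define lam where "lam = exp (- e' / 2)"
      have lam: "0 < lam" "lam < 1" using e' by (auto simp: lam_def)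
      define x' where "x' = lam * x"
      define y' where "y' = lam * y"
      have x': "x' > 0" and y': "y' > 0" using lam x y by (auto simp: x'_def y'_def)
      have "lam * x < x" "lam * y < y" using lam x y by auto
      moreover have "lam * x * (lam * y) < x * y"
      proof -
        have "lam * lam < 1 * 1" using lam by (intro mult_strict_mono) auto
        hence "(lam * lam) * (x * y) < 1 * (x * y)" using x y by (intro mult_strict_right_mono) auto
        thus ?thesis by (simp add: mult_ac)
      qed
      ultimately have D': "1 - x' - y' - 3 * x' * y' > 0" using hD
        unfolding x'_def y'_def by (simp add: mult.assoc)
      have "- (p * ln x') - q * ln y' = L + (p + q) * (e' / 2)"
        using lam x y by (simp add: x'_def y'_def ln_mult hL lam_def algebra_simps)
      also have "\<dots> < L + e'" using pq e' by simp
      finally have lt: "- (p * ln x') - q * ln y' < L + e'" .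
      show "\<exists>x y c. x > 0 \<and> y > 0 \<and> (\<forall>n m. coeff_F2 (n,m) * x^n * y^m \<le> c)
                 \<and> - (p * ln x) - q * ln y < L + e'"
        using coeff_F2_ub[OF x' y' D'] x' y' lt by blast
    qed
  next
    fix C assume oc: "open_cone C" and pqC: "(p,q) \<in> C"
    define n where "n = (\<lambda>N. nat \<lfloor>p * real N\<rfloor>)"
    define m where "m = (\<lambda>N. N - n N)"
    define j where "j = (\<lambda>N. nat \<lfloor>t * real N\<rfloor>)"
    define a where "a = (\<lambda>N. real (j N) / real N)"
    define b where "b = (\<lambda>N. (real (n N) - 1) / real N)"
    define c where "c = (\<lambda>N. (real (m N) - 1) / real N)"
    define g where "g = (\<lambda>N. 2 * (a N + 1 / real N) * ln 2 - a N * ln (a N / b N) - (b N - a N) * ln ((b N - a N) / b N)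
       - ln (real (n N)) / real N - a N * ln (a N / c N) - (c N - a N) * ln ((c N - a N) / c N)
       - ln (real (m N)) / real N)"
    have p1: "p \<le> 1" using pq q by simp
    have nm: "n N + m N = N" for N using floor_le_N[of p N] p p1 by (simp add: n_def m_def)
    have cn: "(\<lambda>N. real (n N) / real N) \<longlonglongrightarrow> p" unfolding n_def by (rule floor_ratio) (use p in auto)
    have ca: "a \<longlonglongrightarrow> t" unfolding a_def j_def by (rule floor_ratio) (use t0 in auto)
    have inv0: "(\<lambda>N. 1 / real N) \<longlonglongrightarrow> 0" by real_asymp
    have ebm: "eventually (\<lambda>N. real (m N) / real N = 1 - real (n N) / real N) sequentially"
      using eventually_gt_at_top[of "0::nat"]
    proof eventually_elim
      case (elim N)
      have "real (m N) = real N - real (n N)" using nm[of N] by (metis add_diff_cancel_left' of_nat_add)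
      thus ?case using elim by (simp add: field_simps)
    qed
    have q1: "1 - p = q" using pq by simp
    have "(\<lambda>N. 1 - real (n N) / real N) \<longlonglongrightarrow> 1 - p" by (intro tendsto_intros cn)
    hence "(\<lambda>N. 1 - real (n N) / real N) \<longlonglongrightarrow> q" unfolding q1 .
    moreover have "eventually (\<lambda>N. 1 - real (n N) / real N = real (m N) / real N) sequentially"
      using ebm by (simp add: eq_commute)
    ultimately have cm: "(\<lambda>N. real (m N) / real N) \<longlonglongrightarrow> q" by (rule Lim_transform_eventually)
    have eb: "b = (\<lambda>N. real (n N) / real N - 1 / real N)" by (auto simp: b_def diff_divide_distrib)
    have ec: "c = (\<lambda>N. real (m N) / real N - 1 / real N)" by (auto simp: c_def diff_divide_distrib)
    have cb: "b \<longlonglongrightarrow> p" unfolding eb using tendsto_diff[OF cn inv0] by simp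
    have cc: "c \<longlonglongrightarrow> q" unfolding ec using tendsto_diff[OF cm inv0] by simp
    have ev_a: "eventually (\<lambda>N. a N > 0) sequentially" using ca t0 by (rule order_tendstoD)
    have "(\<lambda>N. b N - a N) \<longlonglongrightarrow> p - t" by (intro tendsto_intros cb ca)
    hence ev_b: "eventually (\<lambda>N. b N - a N > 0) sequentially" using tp by (intro order_tendstoD) auto
    have "(\<lambda>N. c N - a N) \<longlonglongrightarrow> q - t" by (intro tendsto_intros cc ca)
    hence ev_c: "eventually (\<lambda>N. c N - a N > 0) sequentially" using tqq by (intro order_tendstoD) auto
    have ev_n: "eventually (\<lambda>N. 1 \<le> n N \<and> n N \<le> N + 1) sequentially"
      using order_tendstoD(1)[OF cn p] eventually_gt_at_top[of "0::nat"]
    proof eventually_elim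
      case (elim N)
      thus ?case using nm[of N] by (auto simp: zero_less_divide_iff)
    qed
    have ev_m: "eventually (\<lambda>N. 1 \<le> m N \<and> m N \<le> N + 1) sequentially"
      using order_tendstoD(1)[OF cm q] eventually_gt_at_top[of "0::nat"]
    proof eventually_elim
      case (elim N)
      thus ?case using nm[of N] by (auto simp: zero_less_divide_iff)
    qed
    have ln_n: "(\<lambda>N. ln (real (n N)) / real N) \<longlonglongrightarrow> 0" by (rule ln_over_N_sub[OF ev_n])
    have ln_m: "(\<lambda>N. ln (real (m N)) / real N) \<longlonglongrightarrow> 0" by (rule ln_over_N_sub[OF ev_m])
    have "g \<longlonglongrightarrow> 2 * (t + 0) * ln 2 - t * ln (t / p) - (p - t) * ln ((p - t) / p) - 0
         - t * ln (t / q) - (q - t) * ln ((q - t) / q) - 0"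
      unfolding g_def using ca cb cc inv0 ln_n ln_m t0 tp tqq p q
      by (intro tendsto_intros) auto
    moreover have "2 * (t + 0) * ln 2 - t * ln (t / p) - (p - t) * ln ((p - t) / p) - 0
         - t * ln (t / q) - (q - t) * ln ((q - t) / q) - 0 = L"
    proof -
      have e1: "t / p = 1 - x" "(p - t) / p = x" "p - t = p * x" using p by (simp_all add: t_def field_simps)
      have e2: "t / q = 1 - y" "(q - t) / q = y" "q - t = q * y" using q by (simp_all add: tq field_simps)
      have "2 * t * ln 2 - t * ln (1 - x) - (p - t) * ln x - t * ln (1 - y) - (q - t) * ln y
          = - (p * ln x) - q * ln y + t * (2 * ln 2 + ln x + ln y - ln (1 - x) - ln (1 - y))"
        by (simp add: algebra_simps)
      also have "\<dots> = L" using key hL by simp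
      finally show ?thesis unfolding e1(1,2) e2(1,2) by (simp add: e1(3) e2(3) mult.assoc)
    qed
    ultimately have gL: "g \<longlonglongrightarrow> L" by simp
    have ev: "eventually (\<lambda>N. 0 < coeff_F2 (n N, m N) \<and> real N * g N \<le> ln (coeff_F2 (n N, m N))) sequentially"
      using ev_a ev_b ev_c ev_n ev_m eventually_gt_at_top[of "0::nat"]
    proof eventually_elim
      case (elim N)
      define n' where "n' = n N - 1"
      define m' where "m' = m N - 1"
      define k where "k = j N"
      have N0: "real N > 0" using elim by simp
      have rn: "real (n N) = real n' + 1" and rm: "real (m N) = real m' + 1"
        using elim by (auto simp: n'_def m'_def of_nat_diff)
      have k0: "0 < k" using elim by (simp add: k_def a_def zero_less_divide_iff)
      have "real k < real n'" using elim N0 rn by (simp add: k_def a_def b_def divide_less_cancel)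
      hence kn: "k < n'" by simp
      have "real k < real m'" using elim N0 rm by (simp add: k_def a_def c_def divide_less_cancel)
      hence km: "k < m'" by simp
      have nS: "n N = Suc n'" and mS: "m N = Suc m'" using elim by (auto simp: n'_def m'_def)
      have lb: "2^(2*k+2) * real (n' choose k) * real (m' choose k) \<le> coeff_F2 (n N, m N)"
        unfolding nS mS by (rule coeff_F2_lb)
      have C1: "0 < real (n' choose k)" and C2: "0 < real (m' choose k)" using kn km by auto
      have ppos: "0 < 2^(2*k+2) * real (n' choose k) * real (m' choose k)" using C1 C2 by simp
      have cpos: "0 < coeff_F2 (n N, m N)" using lb ppos by linarith
      have f1: "real N * a N = real k" using N0 by (simp add: a_def k_def)
      have f2: "a N / b N = real k / real n'" using N0 rn by (simp add: a_def b_def k_def)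
      have f3: "real N * (b N - a N) = real (n' - k)" using N0 rn kn
        by (simp add: a_def b_def k_def of_nat_diff field_simps)
      have f4: "(b N - a N) / b N = real (n' - k) / real n'" using N0 rn kn
        by (simp add: a_def b_def k_def of_nat_diff field_simps)
      have g2: "a N / c N = real k / real m'" using N0 rm by (simp add: a_def c_def k_def)
      have g3: "real N * (c N - a N) = real (m' - k)" using N0 rm km
        by (simp add: a_def c_def k_def of_nat_diff field_simps)
      have g4: "(c N - a N) / c N = real (m' - k) / real m'" using N0 rm km
        by (simp add: a_def c_def k_def of_nat_diff field_simps)
      have "real N * g N = 2 * (real N * a N + 1) * ln 2 - (real N * a N) * ln (a N / b N)
          - (real N * (b N - a N)) * ln ((b N - a N) / b N) - ln (real (n N))
          - (real N * a N) * ln (a N / c N) - (real N * (c N - a N)) * ln ((c N - a N) / c N)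
          - ln (real (m N))"
        unfolding g_def using N0 by (intro aux_mulg2) simp
      also have "\<dots> = 2 * (real k + 1) * ln 2
          + (- (real k * ln (real k / real n')) - real (n' - k) * ln (real (n' - k) / real n') - ln (real n' + 1))
          + (- (real k * ln (real k / real m')) - real (m' - k) * ln (real (m' - k) / real m') - ln (real m' + 1))"
        unfolding f1 f2 f3 f4 g2 g3 g4 rn rm by simp
      also have "\<dots> \<le> 2 * (real k + 1) * ln 2 + ln (real (n' choose k)) + ln (real (m' choose k))"
        using ln_binom_lower[OF k0 kn] ln_binom_lower[OF k0 km] by linarith
      also have "\<dots> = ln (2^(2*k+2) * real (n' choose k) * real (m' choose k))"
        using C1 C2 by (simp add: ln_mult ln_realpow ln4 algebra_simps)
      also have "\<dots> \<le> ln (coeff_F2 (n N, m N))" using lb ppos cpos by (subst ln_le_cancel_iff) auto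
      finally show ?case using cpos by simp
    qed
    show "ereal L \<le> tau coeff_F2 C"
      by (rule lb_generic[OF coeff_F2_nonneg oc pqC pq nm cn gL ev])
  qed
qed

lemma SS_A0_ge1: "1 \<le> card (SS (A,s) (Suc n) 0)"
proof (induction n)
  case 0 thus ?case by (subst card_SS_A) simp
next
  case (Suc n) thus ?case by (subst card_SS_A) simp
qed

lemma coeff_F2_B_ge1: "1 \<le> coeff_F2 (0, Suc m)"
proof -
  have "1 \<le> card (SS (B,True) 0 (Suc m))" by (rule SS_B0_ge1)
  also have "\<dots> \<le> card (WS 0 (Suc m))" by (subst card_WS) simp
  finally show ?thesis by (simp add: coeff_F2_eq)
qed

lemma coeff_F2_A_ge1: "1 \<le> coeff_F2 (Suc n, 0)"
proof -
  have "1 \<le> card (SS (A,True) (Suc n) 0)" by (rule SS_A0_ge1)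
  also have "\<dots> \<le> card (WS (Suc n) 0)" by (subst card_WS) simp
  finally show ?thesis by (simp add: coeff_F2_eq)
qed

lemma small_xy:
  fixes e :: real assumes e: "e > 0"
  obtains x y where "x > 0" "y > 0" "1 - x - y - 3 * x * y > 0" "- ln y < e"
proof -
  define y where "y = exp (- e / 2)"
  define x where "x = (1 - y) / 8"
  have y1: "y < 1" "y > 0" using e by (auto simp: y_def)
  have x0: "x > 0" using y1 by (auto simp: x_def)
  have "1 - x - y - 3 * x * y = (1 - y) * (7 - 3 * y) / 8" by (simp add: x_def field_simps)
  also have "\<dots> > 0" using y1 by (intro divide_pos_pos mult_pos_pos) auto
  finally have D: "1 - x - y - 3 * x * y > 0" .
  have "- ln y < e" using e by (simp add: y_def)
  thus ?thesis using that x0 y1 D by blast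
qed

lemma f2_p0: "psi_F2 (0, 1) = ereal 0"
proof -
  have M: "(0::real, 1) \<in> M2" by (simp add: M2_def)
  show ?thesis unfolding psi_F2_def
  proof (rule psi_from_bounds[OF M])
    fix e :: real assume e: "e > 0"
    show "\<exists>C. open_cone C \<and> (0, 1) \<in> C \<and> tau coeff_F2 C \<le> ereal (0 + e)"
    proof (rule upper_from_gf[OF coeff_F2_nonneg _ _ e])
      show "0 + 1 = (1::real)" by simp
      fix e' :: real assume e': "e' > 0"
      obtain x y where h: "x > 0" "y > 0" "1 - x - y - 3 * x * y > 0" "- ln y < e'"
        using small_xy[OF e'] by blast
      have b: "\<forall>n m. coeff_F2 (n,m) * x^n * y^m \<le> 1 + 2 * (x*(1+y)/(1 - x - y - 3*x*y)) + 2 * (y*(1+x)/(1 - x - y - 3*x*y))"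
        using coeff_F2_ub[OF h(1,2,3)] by blast
      show "\<exists>x y c. x > 0 \<and> y > 0 \<and> (\<forall>n m. coeff_F2 (n,m) * x^n * y^m \<le> c)
                 \<and> - (0 * ln x) - 1 * ln y < 0 + e'"
        by (intro exI[of _ x] exI[of _ y] exI[of _ "1 + 2 * (x*(1+y)/(1 - x - y - 3*x*y)) + 2 * (y*(1+x)/(1 - x - y - 3*x*y))"])
          (use h b in simp)
    qed
  next
    fix C assume oc: "open_cone C" and pqC: "(0::real, 1) \<in> C"
    have ev: "eventually (\<lambda>N. 0 < coeff_F2 (0, N) \<and> real N * 0 \<le> ln (coeff_F2 (0, N))) sequentially"
      using eventually_gt_at_top[of "0::nat"]
    proof eventually_elim
      case (elim N)
      then obtain k where "N = Suc k" by (cases N) auto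
      thus ?case using coeff_F2_B_ge1[of k] by simp
    qed
    show "ereal 0 \<le> tau coeff_F2 C"
      by (rule lb_generic[where n = "\<lambda>_. 0" and m = "\<lambda>N. N", OF coeff_F2_nonneg oc pqC _ _ _ tendsto_const ev]) simp_all
  qed
qed

lemma f2_q0: "psi_F2 (1, 0) = ereal 0"
proof -
  have M: "(1::real, 0) \<in> M2" by (simp add: M2_def)
  show ?thesis unfolding psi_F2_def
  proof (rule psi_from_bounds[OF M])
    fix e :: real assume e: "e > 0"
    show "\<exists>C. open_cone C \<and> (1, 0) \<in> C \<and> tau coeff_F2 C \<le> ereal (0 + e)"
    proof (rule upper_from_gf[OF coeff_F2_nonneg _ _ e])
      show "1 + 0 = (1::real)" by simp
      fix e' :: real assume e': "e' > 0"
      obtain y x where h: "y > 0" "x > 0" "1 - y - x - 3 * y * x > 0" "- ln x < e'"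
        using small_xy[OF e'] by blast
      have h3: "1 - x - y - 3 * x * y > 0" using h(3) by (simp add: algebra_simps)
      have b: "\<forall>n m. coeff_F2 (n,m) * x^n * y^m \<le> 1 + 2 * (x*(1+y)/(1 - x - y - 3*x*y)) + 2 * (y*(1+x)/(1 - x - y - 3*x*y))"
        using coeff_F2_ub[OF h(2,1) h3] by blast
      show "\<exists>x y c. x > 0 \<and> y > 0 \<and> (\<forall>n m. coeff_F2 (n,m) * x^n * y^m \<le> c)
                 \<and> - (1 * ln x) - 0 * ln y < 0 + e'"
        by (intro exI[of _ x] exI[of _ y] exI[of _ "1 + 2 * (x*(1+y)/(1 - x - y - 3*x*y)) + 2 * (y*(1+x)/(1 - x - y - 3*x*y))"])
          (use h b in simp)
    qed
  next
    fix C assume oc: "open_cone C" and pqC: "(1::real, 0) \<in> C"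
    have ev: "eventually (\<lambda>N. 0 < coeff_F2 (N, 0) \<and> real N * 0 \<le> ln (coeff_F2 (N, 0))) sequentially"
      using eventually_gt_at_top[of "0::nat"]
    proof eventually_elim
      case (elim N)
      then obtain k where "N = Suc k" by (cases N) auto
      thus ?case using coeff_F2_A_ge1[of k] by simp
    qed
    have c1: "(\<lambda>N. real N / real N) \<longlonglongrightarrow> (1::real)"
      by (rule Lim_transform_eventually[OF tendsto_const]) (use eventually_gt_at_top[of "0::nat"] in
          \<open>auto elim!: eventually_mono\<close>)
    show "ereal 0 \<le> tau coeff_F2 C"
      by (rule lb_generic[where n = "\<lambda>N. N" and m = "\<lambda>_. 0", OF coeff_F2_nonneg oc pqC _ _ c1 tendsto_const ev]) simp_all
  qed
qed

theorem theorem1: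
  shows "(\<forall>p q. (p, q) \<in> M2 \<longrightarrow>
            psi_F2 (p, q) =
              ereal (entropy2 (p, q)
                     + p * ln (2 * q - p + 2 * sqrt (p\<^sup>2 - p * q + q\<^sup>2))
                     + q * ln (2 * p - q + 2 * sqrt (p\<^sup>2 - p * q + q\<^sup>2))))
       \<and> (\<forall>p::real. 0 < p \<and> p < 1 \<longrightarrow>
            (let q = 1 - p in
              psi_Fib (p, q) =
                (if p \<ge> 1 / 2 then ereal (p * ln (p / (p - q)) + q * ln ((p - q) / q))
                 else -\<infinity>)))"
proof (intro conjI allI impI)
  fix p q :: real assume M: "(p, q) \<in> M2"
  hence p0: "p \<ge> 0" and q0: "q \<ge> 0" and pq: "p + q = 1" by (auto simp: M2_def)
  show "psi_F2 (p, q) = ereal (entropy2 (p, q)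
                     + p * ln (2 * q - p + 2 * sqrt (p\<^sup>2 - p * q + q\<^sup>2))
                     + q * ln (2 * p - q + 2 * sqrt (p\<^sup>2 - p * q + q\<^sup>2)))"
  proof (cases "p = 0")
    case True
    hence "q = 1" using pq by simp
    thus ?thesis using True f2_p0 by (simp add: entropy2_def)
  next
    case False
    show ?thesis
    proof (cases "q = 0")
      case True
      hence "p = 1" using pq by simp
      thus ?thesis using True f2_q0 by (simp add: entropy2_def)
    next
      case False
      thus ?thesis using \<open>p \<noteq> 0\<close> p0 q0 pq by (intro f2_interior) auto
    qed
  qed
next
  fix p :: real assume p: "0 < p \<and> p < 1"
  have h: "psi_Fib (p, 1 - p) =
                (if p \<ge> 1 / 2 then ereal (p * ln (p / (p - (1 - p))) + (1 - p) * ln ((p - (1 - p)) / (1 - p)))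
                 else -\<infinity>)"
  proof (cases "p > 1/2")
    case True
    thus ?thesis using fib_big[of p] p by simp
  next
    case False
    show ?thesis
    proof (cases "p = 1/2")
      case True
      show ?thesis unfolding True using fib_half by simp
    next
      case False
      hence "p < 1/2" using \<open>\<not> p > 1/2\<close> by simp
      thus ?thesis using fib_small[of p] p by simp
    qed
  qed
  thus "let q = 1 - p in psi_Fib (p, q) =
                (if p \<ge> 1 / 2 then ereal (p * ln (p / (p - q)) + q * ln ((p - q) / q))
                 else -\<infinity>)"
    by (simp only: Let_def)
qed

end
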